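(* Let $0\le q\in L_1^{loc}(\mathbb{R})$ and assume there is $a\in(0,\infty)$ with $\inf_{x\in\mathbb{R}}\int_{x-a}^{x+a}q(t)\,dt>0$. Suppose there exist $\alpha\ge1$, $\beta>0$ and $X>0$ such that for all $|x|\ge X$, $$\frac1\alpha\le\frac{d(t)}{d(x)}\le\alpha\quad\text{whenever }|t-x|\le\beta.$$ Then for each $p\in(1,\infty]$ there exist constants $c,c(p)\in(0,\infty)$ such that for all $x\in\mathbb{R}$, $$c^{-1}d(x)^{1/p'}\le G_p(x)\le c(p)\,d(x)^{1/p'},\qquad p'=\tfrac{p}{p-1}\ (p'=1\text{ if }p=\infty).$$
   Context: For $x\in\mathbb{R}$, $d(x)=\inf\{d>0:\int_{x-d}^{x+d}q(t)\,dt=2\}$ (well defined since $\int_{\mathbb{R}}q=\infty$ under the hypotheses). $L_\infty(\mathbb{R})$ denotes $C(\mathbb{R})$, bounded continuous functions with the sup norm. $D_p$ is the set of all solutions $y\in L_p(\mathbb{R})$ of $-y'(x)+q(x)y(x)=f(x)$, $x\in\mathbb{R}$, with $\|f\|_p=1$, and $G_p(x)=\sup_{y\in D_p}|y(x)|$. *)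

theory Defs
  imports "HOL-Analysis.Analysis"
begin

definition dfun :: "(real \<Rightarrow> real) \<Rightarrow> real \<Rightarrow> real" where
  "dfun q x = Inf {d. d > 0 \<and> integral {x - d..x + d} q = 2}"

text \<open>Membership in L_p(R) for 1 < p < infinity, and L_infinity(R) := C(R),
  bounded continuous functions. Exponent p is an extended real.\<close>
definition in_Lp :: "ereal \<Rightarrow> (real \<Rightarrow> real) \<Rightarrow> bool" where
  "in_Lp p f = (if p = \<infinity> then continuous_on UNIV f \<and> bounded (range f)
     else f \<in> borel_measurable lebesgue \<and>
          integrable lebesgue (\<lambda>t. \<bar>f t\<bar> powr real_of_ereal p))"

definition Lp_norm :: "ereal \<Rightarrow> (real \<Rightarrow> real) \<Rightarrow> real" where
  "Lp_norm p f = (if p = \<infinity> then (SUP t. \<bar>f t\<bar>)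
     else (LINT t|lebesgue. \<bar>f t\<bar> powr real_of_ereal p) powr (1 / real_of_ereal p))"

text \<open>y is a (Caratheodory) solution of -y' + q y = f on R: y is locally absolutely
  continuous with y' = q y - f almost everywhere, i.e. q y - f is absolutely integrable
  on every compact interval and y b - y a is its integral over [a,b].\<close>
definition is_solution :: "(real \<Rightarrow> real) \<Rightarrow> (real \<Rightarrow> real) \<Rightarrow> (real \<Rightarrow> real) \<Rightarrow> bool" where
  "is_solution q f y = (\<forall>a b. a \<le> b \<longrightarrow>
     (\<lambda>t. q t * y t - f t) absolutely_integrable_on {a..b} \<and>
     integral {a..b} (\<lambda>t. q t * y t - f t) = y b - y a)"

definition Dset :: "ereal \<Rightarrow> (real \<Rightarrow> real) \<Rightarrow> (real \<Rightarrow> real) set" where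
  "Dset p q = {y. in_Lp p y \<and> (\<exists>f. in_Lp p f \<and> Lp_norm p f = 1 \<and> is_solution q f y)}"

definition Gfun :: "ereal \<Rightarrow> (real \<Rightarrow> real) \<Rightarrow> real \<Rightarrow> ereal" where
  "Gfun p q x = (SUP y \<in> Dset p q. ereal \<bar>y x\<bar>)"

definition conj_exp :: "ereal \<Rightarrow> real" where
  "conj_exp p = (if p = \<infinity> then 1 else real_of_ereal p / (real_of_ereal p - 1))"

end

theory Submission
  imports Defs
begin
definition ac :: "(real \<Rightarrow> real) \<Rightarrow> (real \<Rightarrow> real) \<Rightarrow> bool" where
  "ac F g \<longleftrightarrow> (\<forall>u v. u \<le> v \<longrightarrow> g absolutely_integrable_on {u..v} \<and> integral {u..v} g = F v - F u)"

lemma abs_int_imp_int: fixes f :: "real \<Rightarrow> real" shows "f absolutely_integrable_on S \<Longrightarrow> f integrable_on S"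
  by (rule set_lebesgue_integral_eq_integral(1))

lemma acD: "ac F g \<Longrightarrow> u \<le> v \<Longrightarrow> g absolutely_integrable_on {u..v}"
  "ac F g \<Longrightarrow> u \<le> v \<Longrightarrow> integral {u..v} g = F v - F u"
  by (auto simp: ac_def)

lemma acI_integrable: "ac F g \<Longrightarrow> g integrable_on {u..v}"
proof (cases "u \<le> v")
  case True assume "ac F g" then show ?thesis using acD(1)[OF _ True] absolutely_integrable_on_def by blast
next
  case False then show ?thesis by (simp add: integrable_on_empty)
qed

lemma ac_cont:
  assumes "ac F g" shows "continuous_on UNIV F"
proof (rule continuous_at_imp_continuous_on, intro ballI)
  fix t :: real
  have int: "g integrable_on {t-1..t+1}" using acI_integrable[OF assms] .
  have c: "continuous_on {t-1..t+1} (\<lambda>s. integral {t-1..s} g)"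
    by (rule indefinite_integral_continuous_1[OF int])
  have eq: "F s = F (t-1) + integral {t-1..s} g" if "s \<in> {t-1..t+1}" for s
    using acD(2)[OF assms, of "t-1" s] that by simp
  have "continuous_on {t-1..t+1} (\<lambda>s. F (t-1) + integral {t-1..s} g)"
    using continuous_on_add[OF continuous_on_const c] by simp
  then have "continuous_on {t-1..t+1} F"
    by (rule continuous_on_eq) (metis eq)
  then have "continuous_on {t-1<..<t+1} F" by (rule continuous_on_subset) auto
  then show "isCont F t" by (rule continuous_on_interior) auto
qed

lemma abs_int_cont_mult:
  fixes F g :: "real \<Rightarrow> real"
  assumes "continuous_on {u..v} F" "g absolutely_integrable_on {u..v}"
  shows "(\<lambda>t. g t * F t) absolutely_integrable_on {u..v}"
proof -
  have "(\<lambda>t. F t * g t) absolutely_integrable_on {u..v}"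
    by (rule absolutely_integrable_bounded_measurable_product_real[OF
       continuous_imp_measurable_on_sets_lebesgue[OF assms(1)] _
       compact_imp_bounded[OF compact_continuous_image[OF assms(1) compact_Icc]] assms(2)]) auto
  then show ?thesis by (simp add: mult.commute)
qed

lemma ac_add: assumes "ac F f" "ac G g" shows "ac (\<lambda>t. F t + G t) (\<lambda>t. f t + g t)"
  unfolding ac_def
proof (intro allI impI conjI)
  fix u v :: real assume uv: "u \<le> v"
  show "(\<lambda>t. f t + g t) absolutely_integrable_on {u..v}"
    using acD(1)[OF assms(1) uv] acD(1)[OF assms(2) uv] by (rule set_integral_add(1))
  show "integral {u..v} (\<lambda>t. f t + g t) = F v + G v - (F u + G u)"
    using integral_add[OF acI_integrable[OF assms(1)] acI_integrable[OF assms(2)]]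
      acD(2)[OF assms(1) uv] acD(2)[OF assms(2) uv] by simp
qed

lemma ac_cmult: assumes "ac F f" shows "ac (\<lambda>t. c * F t) (\<lambda>t. c * f t)"
  unfolding ac_def
proof (intro allI impI conjI)
  fix u v :: real assume uv: "u \<le> v"
  show "(\<lambda>t. c * f t) absolutely_integrable_on {u..v}"
    by (rule set_integrable_mult_right) (rule acD(1)[OF assms uv])
  have "integral {u..v} (\<lambda>t. c * f t) = c * integral {u..v} f"
    by (rule Henstock_Kurzweil_Integration.integral_mult_right)
  then show "integral {u..v} (\<lambda>t. c * f t) = c * F v - c * F u"
    using acD(2)[OF assms uv] by (simp add: right_diff_distrib)
qed

lemma ac_cong: "ac F f \<Longrightarrow> (\<And>t. F t = G t) \<Longrightarrow> (\<And>t. f t = g t) \<Longrightarrow> ac G g"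
proof -
  assume "ac F f" "\<And>t. F t = G t" "\<And>t. f t = g t"
  then have "F = G" "f = g" by auto
  then show ?thesis using \<open>ac F f\<close> by simp
qed

lemma telescope:
  fixes \<Phi> H :: "real \<Rightarrow> real"
  assumes ab: "a \<le> b" and dpos: "\<delta> > 0" and eps: "\<epsilon> \<ge> 0"
    and loc: "\<And>s t. a \<le> s \<Longrightarrow> s \<le> t \<Longrightarrow> t \<le> b \<Longrightarrow> t - s < \<delta> \<Longrightarrow> \<bar>\<Phi> t - \<Phi> s\<bar> \<le> \<epsilon> * (H t - H s)"
  shows "\<bar>\<Phi> b - \<Phi> a\<bar> \<le> \<epsilon> * (H b - H a)"
proof -
  obtain n :: nat where n: "real n > (b - a) / \<delta>" using reals_Archimedean2 by blast
  have "(b - a) / \<delta> \<ge> 0" using ab dpos by simp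
  then have npos: "n > 0" using n by (cases n) auto
  define h where "h = (b - a) / n"
  have h0: "h \<ge> 0" using ab npos by (simp add: h_def)
  have hd: "h < \<delta>" using n npos dpos by (simp add: h_def field_simps)
  have nh: "real n * h = b - a" using npos by (simp add: h_def)
  have "k \<le> n \<Longrightarrow> \<bar>\<Phi> (a + real k*h) - \<Phi> a\<bar> \<le> \<epsilon> * (H (a + real k*h) - H a)" for k :: nat
  proof (induction k)
    case 0 then show ?case by simp
  next
    case (Suc k)
    define s where "s = a + real k * h"
    define t where "t = a + real (Suc k) * h"
    have ts: "t = s + h" by (simp add: s_def t_def algebra_simps)
    have "real (Suc k) * h \<le> real n * h" using Suc.prems h0 by (intro mult_right_mono) auto
    then have tb: "t \<le> b" using nh by (simp add: t_def)
    have as: "a \<le> s" using h0 by (simp add: s_def)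
    have 1: "\<bar>\<Phi> t - \<Phi> s\<bar> \<le> \<epsilon> * (H t - H s)"
      by (rule loc[OF as]) (use ts h0 tb hd in auto)
    have 2: "\<bar>\<Phi> s - \<Phi> a\<bar> \<le> \<epsilon> * (H s - H a)" using Suc by (simp add: s_def)
    have "\<bar>\<Phi> t - \<Phi> a\<bar> \<le> \<bar>\<Phi> t - \<Phi> s\<bar> + \<bar>\<Phi> s - \<Phi> a\<bar>" by linarith
    also have "\<dots> \<le> \<epsilon> * (H t - H s) + \<epsilon> * (H s - H a)" using 1 2 by linarith
    also have "\<dots> = \<epsilon> * (H t - H a)" by (simp add: right_diff_distrib)
    finally show ?case by (simp add: t_def)
  qed
  from this[of n] show ?thesis using nh by simp
qed

lemma mvt_any:
  fixes \<phi> \<phi>' :: "real \<Rightarrow> real"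
  assumes d: "\<And>x. (\<phi> has_real_derivative \<phi>' x) (at x)"
  shows "\<exists>\<xi>. min A B \<le> \<xi> \<and> \<xi> \<le> max A B \<and> \<phi> B - \<phi> A = (B - A) * \<phi>' \<xi>"
proof -
  consider "A < B" | "A = B" | "B < A" by linarith
  then show ?thesis
  proof cases
    case 1 then show ?thesis using MVT2[OF 1, of \<phi> \<phi>'] d by (metis less_imp_le max.absorb2 min.absorb1)
  next
    case 2 then show ?thesis by auto
  next
    case 3
    from MVT2[OF 3, of \<phi> \<phi>'] d obtain z where "z > B" "z < A" "\<phi> A - \<phi> B = (A - B) * \<phi>' z" by blast
    then show ?thesis by (intro exI[of _ z]) (auto simp: algebra_simps)
  qed
qed

lemma ivt_any:
  fixes F :: "real \<Rightarrow> real"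
  assumes "s \<le> t" "continuous_on {s..t} F" "min (F s) (F t) \<le> \<xi>" "\<xi> \<le> max (F s) (F t)"
  shows "\<exists>w\<in>{s..t}. F w = \<xi>"
proof (cases "F s \<le> F t")
  case True then show ?thesis using IVT'[of F s \<xi> t] assms by auto
next
  case False then show ?thesis using IVT2'[of F t \<xi> s] assms by auto
qed

lemma ac_chain:
  fixes \<phi> \<phi>' :: "real \<Rightarrow> real"
  assumes F: "ac F g" and dphi: "\<And>x. (\<phi> has_real_derivative \<phi>' x) (at x)"
    and cphi: "continuous_on UNIV \<phi>'"
  shows "ac (\<lambda>t. \<phi> (F t)) (\<lambda>t. g t * \<phi>' (F t))"
  unfolding ac_def
proof (intro allI impI conjI)
  have cF: "continuous_on UNIV F" by (rule ac_cont[OF F])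
  have cPF: "continuous_on S (\<lambda>t. \<phi>' (F t))" for S
    using continuous_on_compose2[OF cphi cF] by (rule continuous_on_subset) auto
  have ai: "(\<lambda>t. g t * \<phi>' (F t)) absolutely_integrable_on {u..v}" if "u \<le> v" for u v
    by (rule abs_int_cont_mult[OF cPF acD(1)[OF F that]])
  have ii: "(\<lambda>t. g t * \<phi>' (F t)) integrable_on {u..v}" for u v
  proof (cases "u \<le> v")
    case True then show ?thesis using abs_int_imp_int[OF ai[OF True]] by simp
  qed (simp add: integrable_on_empty)
  have iabs: "(\<lambda>t. \<bar>g t\<bar>) integrable_on {u..v}" for u v
    by (cases "u \<le> v") (use acD(1)[OF F] in \<open>auto simp: absolutely_integrable_on_def integrable_on_empty\<close>)
  fix u v :: real assume uv: "u \<le> v"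
  show "(\<lambda>t. g t * \<phi>' (F t)) absolutely_integrable_on {u..v}" by (rule ai[OF uv])
  define \<Phi> where "\<Phi> t = \<phi> (F t) - integral {u..t} (\<lambda>s. g s * \<phi>' (F s))" for t
  define H where "H t = integral {u..t} (\<lambda>s. \<bar>g s\<bar>)" for t
  have Hmono: "H u \<le> H v" unfolding H_def using uv
    by (simp add: integral_nonneg iabs)
  have main: "\<bar>\<Phi> v - \<Phi> u\<bar> \<le> \<epsilon> * (H v - H u)" if eps: "\<epsilon> > 0" for \<epsilon>
  proof -
    have "uniformly_continuous_on {u..v} (\<lambda>t. \<phi>' (F t))"
      by (rule compact_uniformly_continuous[OF cPF compact_Icc])
    then obtain \<delta> where dpos: "\<delta> > 0" and dd: "\<And>s t. s \<in> {u..v} \<Longrightarrow> t \<in> {u..v} \<Longrightarrow> dist t s < \<delta> \<Longrightarrow>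
        dist (\<phi>' (F t)) (\<phi>' (F s)) < \<epsilon>"
      unfolding uniformly_continuous_on_def using eps by metis
    show ?thesis
    proof (rule telescope[OF uv dpos less_imp_le[OF eps]])
      fix s t assume st: "u \<le> s" "s \<le> t" "t \<le> v" "t - s < \<delta>"
      obtain \<xi> where xi: "min (F s) (F t) \<le> \<xi>" "\<xi> \<le> max (F s) (F t)"
        "\<phi> (F t) - \<phi> (F s) = (F t - F s) * \<phi>' \<xi>"
        using mvt_any[OF dphi] by blast
      obtain w where w: "w \<in> {s..t}" "F w = \<xi>"
        using ivt_any[OF st(2) _ xi(1,2)] continuous_on_subset[OF cF] by blast
      have Fst: "F t - F s = integral {s..t} g" using acD(2)[OF F st(2)] by simp
      have comb: "integral {u..t} (\<lambda>r. g r * \<phi>' (F r)) = integral {u..s} (\<lambda>r. g r * \<phi>' (F r)) + integral {s..t} (\<lambda>r. g r * \<phi>' (F r))"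
        using Henstock_Kurzweil_Integration.integral_combine[OF st(1,2) ii] by simp
      have combH: "H t - H s = integral {s..t} (\<lambda>r. \<bar>g r\<bar>)"
        unfolding H_def using Henstock_Kurzweil_Integration.integral_combine[OF st(1,2) iabs] by simp
      have gi: "g integrable_on {s..t}" by (rule acI_integrable[OF F])
      have "\<Phi> t - \<Phi> s = integral {s..t} g * \<phi>' (F w) - integral {s..t} (\<lambda>r. g r * \<phi>' (F r))"
        unfolding \<Phi>_def using comb xi(3) Fst w(2) by simp
      also have "\<dots> = integral {s..t} (\<lambda>r. g r * (\<phi>' (F w) - \<phi>' (F r)))"
        using Henstock_Kurzweil_Integration.integral_mult_left[of S g "\<phi>' (F w)" for S] integral_diff[OF integrable_on_mult_left[OF gi] ii, of "\<phi>' (F w)"]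
        by (simp add: right_diff_distrib)
      finally have eq: "\<Phi> t - \<Phi> s = integral {s..t} (\<lambda>r. g r * (\<phi>' (F w) - \<phi>' (F r)))" .
      have "norm (integral {s..t} (\<lambda>r. g r * (\<phi>' (F w) - \<phi>' (F r)))) \<le> integral {s..t} (\<lambda>r. \<epsilon> * \<bar>g r\<bar>)"
      proof (rule integral_norm_bound_integral)
        show "(\<lambda>r. g r * (\<phi>' (F w) - \<phi>' (F r))) integrable_on {s..t}"
          using integral_diff integrable_diff[OF integrable_on_mult_left[OF gi] ii, of "\<phi>' (F w)"]
          by (simp add: right_diff_distrib)
        show "(\<lambda>r. \<epsilon> * \<bar>g r\<bar>) integrable_on {s..t}" using integrable_on_cmult_left[OF iabs, of \<epsilon> s t] by simp
        fix r assume r: "r \<in> {s..t}"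
        have "dist (\<phi>' (F w)) (\<phi>' (F r)) < \<epsilon>"
          using dd[of r w] r w(1) st by (auto simp: dist_real_def)
        then have "\<bar>\<phi>' (F w) - \<phi>' (F r)\<bar> \<le> \<epsilon>" by (simp add: dist_real_def)
        then show "norm (g r * (\<phi>' (F w) - \<phi>' (F r))) \<le> \<epsilon> * \<bar>g r\<bar>"
          by (simp add: abs_mult) (metis abs_ge_zero mult.commute mult_left_mono)
      qed
      also have "\<dots> = \<epsilon> * (H t - H s)" using combH by simp
      finally show "\<bar>\<Phi> t - \<Phi> s\<bar> \<le> \<epsilon> * (H t - H s)" using eq by simp
    qed
  qed
  have "\<bar>\<Phi> v - \<Phi> u\<bar> \<le> 0"
  proof (rule field_le_epsilon)
    fix e :: real assume e: "e > 0"
    have "\<bar>\<Phi> v - \<Phi> u\<bar> \<le> (e / (H v - H u + 1)) * (H v - H u)"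
      using main[of "e / (H v - H u + 1)"] e Hmono by simp
    also have "\<dots> \<le> e" using e Hmono by (simp add: field_simps)
    finally show "\<bar>\<Phi> v - \<Phi> u\<bar> \<le> 0 + e" by simp
  qed
  then show "integral {u..v} (\<lambda>t. g t * \<phi>' (F t)) = \<phi> (F v) - \<phi> (F u)"
    unfolding \<Phi>_def by simp
qed

lemma ac_prod:
  assumes F: "ac F f" and G: "ac G g"
  shows "ac (\<lambda>t. F t * G t) (\<lambda>t. f t * G t + F t * g t)"
proof -
  have d: "\<And>x. ((\<lambda>x. x^2) has_real_derivative 2 * x) (at x)"
    by (auto intro!: derivative_eq_intros)
  have c: "continuous_on UNIV (\<lambda>x::real. 2 * x)" by (intro continuous_intros)
  have s: "ac (\<lambda>t. F t + G t) (\<lambda>t. f t + g t)" by (rule ac_add[OF F G])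
  have m: "ac (\<lambda>t. F t + (-1) * G t) (\<lambda>t. f t + (-1) * g t)" by (rule ac_add[OF F ac_cmult[OF G]])
  have s2: "ac (\<lambda>t. (F t + G t)^2) (\<lambda>t. (f t + g t) * (2 * (F t + G t)))"
    using ac_chain[OF s d c] by simp
  have m2: "ac (\<lambda>t. (F t + (-1) * G t)^2) (\<lambda>t. (f t + (-1) * g t) * (2 * (F t + (-1) * G t)))"
    using ac_chain[OF m d c] by simp
  have "ac (\<lambda>t. (1/4) * ((F t + G t)^2 + (-1) * (F t + (-1) * G t)^2))
      (\<lambda>t. (1/4) * ((f t + g t) * (2 * (F t + G t)) + (-1) * ((f t + (-1) * g t) * (2 * (F t + (-1) * G t)))))"
    by (rule ac_cmult[OF ac_add[OF s2 ac_cmult[OF m2]]])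
  then show ?thesis by (rule ac_cong) (simp_all add: algebra_simps power2_eq_square)
qed

locale qset =
  fixes q :: "real \<Rightarrow> real" and a :: real
  assumes q_nonneg: "\<And>t. q t \<ge> 0"
    and q_loc: "\<And>u v. q absolutely_integrable_on {u..v}"
    and a_pos: "a > 0"
    and inf_pos: "(INF x. integral {x - a..x + a} q) > 0"
begin

definition m where "m = (INF x. integral {x - a..x + a} q)"

lemma m_pos: "m > 0" using inf_pos by (simp add: m_def)

lemma qint: "q integrable_on {u..v}"
  using abs_int_imp_int[OF q_loc] .

lemma m_le: "m \<le> integral {x - a..x + a} q"
  unfolding m_def
proof (rule cINF_lower)
  show "bdd_below (range (\<lambda>x. integral {x - a..x + a} q))"
    by (rule bdd_belowI[of _ 0]) (auto intro!: integral_nonneg qint q_nonneg)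
qed simp

definition Pr where "Pr t = (if 0 \<le> t then integral {0..t} q else - integral {t..0} q)"

lemma Pr_diff: "u \<le> v \<Longrightarrow> integral {u..v} q = Pr v - Pr u"
proof -
  assume uv: "u \<le> v"
  consider "0 \<le> u" | "u < 0" "0 \<le> v" | "v < 0" by linarith
  then show ?thesis
  proof cases
    case 1 then show ?thesis
      using Henstock_Kurzweil_Integration.integral_combine[OF 1 uv qint] uv by (simp add: Pr_def)
  next
    case 2 then show ?thesis
      using Henstock_Kurzweil_Integration.integral_combine[of u 0 v q] qint by (simp add: Pr_def)
  next
    case 3 then show ?thesis
      using Henstock_Kurzweil_Integration.integral_combine[of u v 0 q] qint uv by (simp add: Pr_def)
  qed
qed

lemma ac_Pr: "ac Pr q"
  unfolding ac_def using q_loc Pr_diff by blast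

lemma Pr_cont: "continuous_on UNIV Pr" by (rule ac_cont[OF ac_Pr])

lemma Pr_mono: "u \<le> v \<Longrightarrow> Pr u \<le> Pr v"
  using Pr_diff[of u v] integral_nonneg[OF qint q_nonneg, of u v] by simp

lemma chunk:
  assumes L: "L > 0" and th: "\<theta> \<ge> 0"
    and loc: "\<And>u. s \<le> u \<Longrightarrow> u + L \<le> R \<Longrightarrow> Pr (u + L) - Pr u \<ge> \<theta>"
    and st: "s \<le> t" "t \<le> R"
  shows "Pr t - Pr s \<ge> \<theta> * ((t - s) / L - 1)"
proof -
  define k where "k = nat \<lfloor>(t - s) / L\<rfloor>"
  have k1: "real k * L \<le> t - s"
  proof -
    have "real k = of_int \<lfloor>(t - s) / L\<rfloor>" using st L by (simp add: k_def)
    also have "\<dots> \<le> (t - s) / L" by simp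
    finally show ?thesis using L by (simp add: field_simps)
  qed
  have k2: "real k > (t - s) / L - 1"
  proof -
    have "real k = of_int \<lfloor>(t - s) / L\<rfloor>" using st L by (simp add: k_def)
    then show ?thesis by linarith
  qed
  have ind: "j \<le> k \<Longrightarrow> Pr (s + real j * L) - Pr s \<ge> real j * \<theta>" for j
  proof (induction j)
    case 0 then show ?case by simp
  next
    case (Suc j)
    have "real (Suc j) * L \<le> real k * L" using Suc.prems L by (simp add: mult_right_mono)
    then have le: "s + real j * L + L \<le> R" using k1 st by (simp add: algebra_simps)
    have "Pr (s + real j * L + L) - Pr (s + real j * L) \<ge> \<theta>"
      by (rule loc) (use le L in \<open>auto simp: zero_le_mult_iff\<close>)
    then show ?case using Suc by (simp add: algebra_simps)
  qed
  have "Pr t \<ge> Pr (s + real k * L)" by (rule Pr_mono) (use k1 in simp)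
  then have "Pr t - Pr s \<ge> real k * \<theta>" using ind[of k] by simp
  moreover have "real k * \<theta> \<ge> ((t - s) / L - 1) * \<theta>" using k2 th by (simp add: mult_right_mono)
  ultimately show ?thesis by (simp add: mult.commute)
qed

lemma global_lower:
  assumes "s \<le> t" shows "Pr t - Pr s \<ge> m * ((t - s) / (2*a) - 1)"
proof (rule chunk[where R = t])
  fix u assume "s \<le> u" "u + 2*a \<le> t"
  have "m \<le> integral {(u + a) - a..(u + a) + a} q" by (rule m_le)
  also have "\<dots> = Pr (u + 2*a) - Pr u" using Pr_diff[of u "u + 2*a"] a_pos by (simp add: algebra_simps)
  finally show "Pr (u + 2 * a) - Pr u \<ge> m" .
qed (use assms a_pos m_pos in auto)

definition g :: "real \<Rightarrow> real \<Rightarrow> real" where "g x s = Pr (x + s) - Pr (x - s)"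

lemma g_cont: "continuous_on UNIV (g x)"
  unfolding g_def
  by (intro continuous_intros continuous_on_compose2[OF Pr_cont]) auto

lemma dfun_set: "{d. d > 0 \<and> integral {x - d..x + d} q = 2} = {d. 0 \<le> d \<and> g x d = 2}"
proof -
  have "integral {x - d..x + d} q = g x d" if "0 \<le> d" for d
    using Pr_diff[of "x - d" "x + d"] that by (simp add: g_def)
  moreover have "g x 0 = 0" by (simp add: g_def)
  ultimately show ?thesis by (auto simp: order_le_less)
qed

lemma g_ivt:
  assumes "0 \<le> s" "g x s \<ge> 2" shows "\<exists>s'. 0 \<le> s' \<and> s' \<le> s \<and> g x s' = 2"
proof -
  have "g x 0 = 0" by (simp add: g_def)
  then show ?thesis using IVT'[of "g x" 0 2 s] assms continuous_on_subset[OF g_cont] by force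
qed

lemma g_big: "\<exists>s\<ge>0. g x s \<ge> 2"
proof -
  define K where "K = a * (1 + 2 / m)"
  have K: "K \<ge> 0" using a_pos m_pos by (simp add: K_def)
  have "g x K \<ge> m * (((x + K) - (x - K)) / (2*a) - 1)" unfolding g_def
    by (rule global_lower) (use K in simp)
  also have "m * (((x + K) - (x - K)) / (2*a) - 1) = 2" using a_pos m_pos
    by (simp add: K_def field_simps)
  finally show ?thesis using K by blast
qed

lemma dfun_props:
  shows "dfun q x \<in> {d. 0 \<le> d \<and> g x d = 2}"
    and "\<And>s. s \<ge> 0 \<Longrightarrow> g x s \<ge> 2 \<Longrightarrow> dfun q x \<le> s"
proof -
  let ?S = "{d. 0 \<le> d \<and> g x d = 2}"
  have eq: "dfun q x = Inf ?S" unfolding dfun_def dfun_set ..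
  have ne: "?S \<noteq> {}" using g_big g_ivt by blast
  have bdd: "bdd_below ?S" by (rule bdd_belowI[of _ 0]) auto
  have cl: "closed ?S"
    using closed_Collect_conj[OF closed_Collect_le[OF continuous_on_const continuous_on_id]
        closed_Collect_eq[OF g_cont continuous_on_const]] by simp
  show "dfun q x \<in> ?S" unfolding eq by (rule closed_contains_Inf[OF ne bdd cl])
  fix s assume "s \<ge> 0" "g x s \<ge> 2"
  then obtain s' where "0 \<le> s'" "s' \<le> s" "g x s' = 2" using g_ivt by blast
  then have "Inf ?S \<le> s'" by (intro cInf_lower[OF _ bdd]) auto
  then show "dfun q x \<le> s" unfolding eq using \<open>s' \<le> s\<close> by simp
qed

lemma d_pos: "dfun q x > 0"
proof -
  have "dfun q x \<ge> 0" "g x (dfun q x) = 2" using dfun_props(1) by auto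
  moreover have "g x 0 = 0" by (simp add: g_def)
  ultimately show ?thesis by (cases "dfun q x = 0") auto
qed

lemma d_eq: "Pr (x + dfun q x) - Pr (x - dfun q x) = 2"
  using dfun_props(1) by (simp add: g_def)

lemma d_lip: "dfun q t \<le> dfun q x + \<bar>t - x\<bar>"
proof (rule dfun_props(2))
  show "0 \<le> dfun q x + \<bar>t - x\<bar>" using d_pos[of x] by simp
  have "Pr (t + (dfun q x + \<bar>t - x\<bar>)) \<ge> Pr (x + dfun q x)" by (rule Pr_mono) auto
  moreover have "Pr (t - (dfun q x + \<bar>t - x\<bar>)) \<le> Pr (x - dfun q x)" by (rule Pr_mono) auto
  ultimately show "2 \<le> g t (dfun q x + \<bar>t - x\<bar>)" using d_eq[of x] by (simp add: g_def)
qed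

lemma d_cont: "continuous_on UNIV (dfun q)"
  unfolding continuous_on_iff
proof (intro ballI allI impI)
  fix x e :: real assume "e > 0"
  show "\<exists>d>0. \<forall>x'\<in>UNIV. dist x' x < d \<longrightarrow> dist (dfun q x') (dfun q x) < e"
  proof (intro exI[of _ e] conjI ballI impI)
    fix x' assume "dist x' x < e"
    then show "dist (dfun q x') (dfun q x) < e"
      using d_lip[of x' x] d_lip[of x x'] by (simp add: dist_real_def abs_minus_commute)
  qed fact
qed

end

lemma exp_int:
  fixes c x T :: real
  assumes c: "c > 0" and xT: "x \<le> T"
  shows "(\<lambda>t. exp (-c * (t - x))) integrable_on {x..T}"
    and "integral {x..T} (\<lambda>t. exp (-c * (t - x))) \<le> 1 / c"
proof -
  have "((\<lambda>t. exp (-c * (t - x))) has_integral ((- exp (-c * (T - x)) / c) - (- exp (-c * (x - x)) / c))) {x..T}"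
    using xT c
    by (intro fundamental_theorem_of_calculus)
       (auto intro!: derivative_eq_intros simp flip: has_real_derivative_iff_has_vector_derivative)
  then have h: "((\<lambda>t. exp (-c * (t - x))) has_integral ((1 - exp (-c * (T - x))) / c)) {x..T}"
    by (simp add: diff_divide_distrib)
  then show "(\<lambda>t. exp (-c * (t - x))) integrable_on {x..T}" by blast
  have "(1 - exp (-c * (T - x))) / c \<le> 1 / c" using c by (simp add: divide_right_mono)
  then show "integral {x..T} (\<lambda>t. exp (-c * (t - x))) \<le> 1 / c" using integral_unique[OF h] by simp
qed

lemma exp_neg_le_inv: "(u::real) > 0 \<Longrightarrow> exp (- u) \<le> 1 / u"
proof -
  assume u: "u > 0"
  have "u \<le> exp u" using exp_ge_add_one_self[of u] by linarith
  then show ?thesis using u by (simp add: exp_minus field_simps)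
qed

locale qset2 = qset +
  fixes \<alpha> \<beta> X :: real
  assumes alpha: "\<alpha> \<ge> 1" and beta: "\<beta> > 0" and Xpos: "X > 0"
    and dcomp: "\<And>x t. \<bar>x\<bar> \<ge> X \<Longrightarrow> \<bar>t - x\<bar> \<le> \<beta> \<Longrightarrow>
                  1 / \<alpha> \<le> dfun q t / dfun q x \<and> dfun q t / dfun q x \<le> \<alpha>"
begin

definition P where "P x t = exp (- (Pr t - Pr x))"

lemma P_cont: "continuous_on S (P x)"
  unfolding P_def by (intro continuous_intros continuous_on_compose2[OF Pr_cont]) auto

lemma P_int: "P x integrable_on {u..v}"
  by (rule integrable_continuous_real[OF P_cont])

lemma delta_ex: "\<exists>\<delta>>0. \<forall>x. \<bar>x\<bar> \<le> X \<longrightarrow> dfun q x \<ge> \<delta>"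
proof -
  have ne: "{-X..X} \<noteq> {}" using Xpos by simp
  obtain x0 where x0: "\<forall>y\<in>{-X..X}. dfun q x0 \<le> dfun q y"
    using continuous_attains_inf[OF compact_Icc ne continuous_on_subset[OF d_cont subset_UNIV]] by blast
  show ?thesis
  proof (intro exI[of _ "dfun q x0"] conjI allI impI)
    show "0 < dfun q x0" by (rule d_pos)
    fix x assume "\<bar>x\<bar> \<le> X"
    then have "x \<in> {-X..X}" by auto
    then show "dfun q x0 \<le> dfun q x" using x0 by blast
  qed
qed

definition \<kappa> where "\<kappa> = m / (2 * a)"
lemma kappa_pos: "\<kappa> > 0" using m_pos a_pos by (simp add: \<kappa>_def)

lemma P_global: "x \<le> t \<Longrightarrow> P x t \<le> exp m * exp (- \<kappa> * (t - x))"
proof -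
  assume "x \<le> t"
  then have "Pr t - Pr x \<ge> m * ((t - x) / (2*a) - 1)" by (rule global_lower)
  then have "- (Pr t - Pr x) \<le> m + (- \<kappa> * (t - x))" by (simp add: \<kappa>_def algebra_simps)
  then show ?thesis unfolding P_def by (simp flip: exp_add)
qed

lemma local_lower:
  assumes X: "\<bar>x\<bar> \<ge> X" and t: "x \<le> t" "t \<le> x + \<beta>"
  shows "Pr t - Pr x \<ge> (t - x) / (\<alpha> * dfun q x) - 2"
proof -
  define D where "D = \<alpha> * dfun q x"
  have dq: "dfun q x > 0" by (rule d_pos)
  have Dpos: "D > 0" unfolding D_def using alpha dq by simp
  have ch: "Pr t - Pr x \<ge> 2 * ((t - x) / (2 * D) - 1)"
  proof (rule chunk[where R = "x + \<beta>"])
    fix u assume u: "x \<le> u" "u + 2 * D \<le> x + \<beta>"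
    define c where "c = u + D"
    have c1: "c - x \<ge> 0" "c - x \<le> \<beta>" using u Dpos unfolding c_def by linarith+
    have "\<bar>c - x\<bar> \<le> \<beta>" using c1 by (simp add: abs_of_nonneg)
    then have "dfun q c / dfun q x \<le> \<alpha>" using dcomp[OF X] by blast
    then have "dfun q c \<le> \<alpha> * dfun q x" using dq by (simp add: divide_le_eq)
    then have dc: "dfun q c \<le> D" unfolding D_def .
    have "Pr (c + dfun q c) \<le> Pr (u + 2 * D)" by (rule Pr_mono) (use dc in \<open>simp add: c_def\<close>)
    moreover have "Pr u \<le> Pr (c - dfun q c)" by (rule Pr_mono) (use dc in \<open>simp add: c_def\<close>)
    moreover have "Pr (c + dfun q c) - Pr (c - dfun q c) = 2" by (rule d_eq)
    ultimately show "Pr (u + 2 * D) - Pr u \<ge> 2" by linarith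
  next
    show "2 * D > 0" using Dpos by simp
  qed (use t in auto)
  have "2 * ((t - x) / (2 * D) - 1) = (t - x) / D - 2" using Dpos by (simp add: field_simps)
  with ch have "Pr t - Pr x \<ge> (t - x) / D - 2" by linarith
  then show ?thesis unfolding D_def .
qed

lemma K_far:
  assumes X: "\<bar>x\<bar> \<ge> X" and xT: "x \<le> T"
  shows "integral {x..T} (P x) \<le> \<alpha> * (exp 2 + exp (2 + m + \<kappa> * \<beta>) / \<beta> / \<kappa>) * dfun q x"
proof -
  define D where "D = \<alpha> * dfun q x"
  have dq: "dfun q x > 0" by (rule d_pos)
  have Dpos: "D > 0" unfolding D_def using alpha dq by simp
  define Bc where "Bc = exp (2 + m + \<kappa> * \<beta>) / \<beta>"
  have Bc: "Bc > 0" using beta by (simp add: Bc_def)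
  define E1 where "E1 t = exp (- (1 / D) * (t - x))" for t
  define E2 where "E2 t = exp (- \<kappa> * (t - x))" for t
  have pw: "P x t \<le> exp 2 * E1 t + (Bc * D) * E2 t" if t: "t \<in> {x..T}" for t
  proof (cases "t \<le> x + \<beta>")
    case True
    have "Pr t - Pr x \<ge> (t - x) / D - 2" using local_lower[OF X _ True] t unfolding D_def by simp
    moreover have "(t - x) / D = (1 / D) * (t - x)" by simp
    ultimately have "- (Pr t - Pr x) \<le> 2 + (- (1 / D) * (t - x))" by linarith
    then have "P x t \<le> exp (2 + (- (1 / D) * (t - x)))" unfolding P_def by simp
    also have "\<dots> = exp 2 * E1 t" unfolding E1_def by (rule exp_add)
    finally have "P x t \<le> exp 2 * E1 t" .
    moreover have "(Bc * D) * E2 t \<ge> 0" using Bc Dpos unfolding E2_def by simp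
    ultimately show ?thesis by linarith
  next
    case False
    have l1: "Pr (x + \<beta>) - Pr x \<ge> \<beta> / D - 2"
      using local_lower[OF X, of "x + \<beta>"] beta unfolding D_def by simp
    have l2: "Pr t - Pr (x + \<beta>) \<ge> m * ((t - (x + \<beta>)) / (2*a) - 1)"
      by (rule global_lower) (use False in simp)
    have eqm: "m * ((t - (x + \<beta>)) / (2*a) - 1) = \<kappa> * (t - x) - \<kappa> * \<beta> - m"
      using a_pos by (simp add: \<kappa>_def field_simps)
    have "- (Pr t - Pr x) \<le> (2 + m + \<kappa> * \<beta>) + (- (\<beta> / D)) + (- \<kappa> * (t - x))"
      using l1 l2 unfolding eqm by linarith
    then have "P x t \<le> exp ((2 + m + \<kappa> * \<beta>) + (- (\<beta> / D)) + (- \<kappa> * (t - x)))" unfolding P_def by simp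
    also have "\<dots> = exp (2 + m + \<kappa> * \<beta>) * exp (- (\<beta> / D)) * E2 t"
      unfolding E2_def by (simp only: exp_add)
    also have "\<dots> \<le> exp (2 + m + \<kappa> * \<beta>) * (D / \<beta>) * E2 t"
    proof -
      have "exp (- (\<beta> / D)) \<le> 1 / (\<beta> / D)" by (rule exp_neg_le_inv) (use beta Dpos in simp)
      then have "exp (- (\<beta> / D)) \<le> D / \<beta>" by simp
      then show ?thesis unfolding E2_def by (intro mult_right_mono mult_left_mono) auto
    qed
    also have "\<dots> = (Bc * D) * E2 t" by (simp add: Bc_def)
    finally have "P x t \<le> (Bc * D) * E2 t" .
    moreover have "exp 2 * E1 t \<ge> 0" unfolding E1_def by simp
    ultimately show ?thesis by linarith
  qed
  have i1: "E1 integrable_on {x..T}" unfolding E1_def using exp_int(1)[of "1/D" x T] Dpos xT by simp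
  have i2: "E2 integrable_on {x..T}" unfolding E2_def using exp_int(1)[of \<kappa> x T] kappa_pos xT by simp
  have b1: "integral {x..T} E1 \<le> D" unfolding E1_def using exp_int(2)[of "1/D" x T] Dpos xT by simp
  have b2: "integral {x..T} E2 \<le> 1 / \<kappa>" unfolding E2_def using exp_int(2)[of \<kappa> x T] kappa_pos xT by simp
  have j1: "(\<lambda>t. exp 2 * E1 t) integrable_on {x..T}" by (rule integrable_on_mult_right[OF i1])
  have j2: "(\<lambda>t. (Bc * D) * E2 t) integrable_on {x..T}" by (rule integrable_on_mult_right[OF i2])
  have "integral {x..T} (P x) \<le> integral {x..T} (\<lambda>t. exp 2 * E1 t + (Bc * D) * E2 t)"
    by (rule integral_le[OF P_int integrable_add[OF j1 j2] pw])
  also have "\<dots> = integral {x..T} (\<lambda>t. exp 2 * E1 t) + integral {x..T} (\<lambda>t. (Bc * D) * E2 t)"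
    by (rule integral_add[OF j1 j2])
  also have "\<dots> = exp 2 * integral {x..T} E1 + (Bc * D) * integral {x..T} E2"
    by (simp only: Henstock_Kurzweil_Integration.integral_mult_right)
  also have "\<dots> \<le> exp 2 * D + (Bc * D) * (1 / \<kappa>)"
    using b1 b2 Dpos Bc by (intro add_mono mult_left_mono) auto
  also have "\<dots> = \<alpha> * (exp 2 + exp (2 + m + \<kappa> * \<beta>) / \<beta> / \<kappa>) * dfun q x"
    unfolding D_def Bc_def by (simp add: algebra_simps)
  finally show ?thesis .
qed

lemma K_glob:
  assumes xT: "x \<le> T"
  shows "integral {x..T} (P x) \<le> exp m / \<kappa>"
proof -
  have i2: "(\<lambda>t. exp (- \<kappa> * (t - x))) integrable_on {x..T}" using exp_int(1)[of \<kappa> x T] kappa_pos xT by simp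
  have "integral {x..T} (P x) \<le> integral {x..T} (\<lambda>t. exp m * exp (- \<kappa> * (t - x)))"
    by (rule integral_le[OF P_int]) (use i2 P_global in \<open>auto intro!: integrable_on_cmult_left[of _ _ "exp m", simplified]\<close>)
  also have "\<dots> = exp m * integral {x..T} (\<lambda>t. exp (- \<kappa> * (t - x)))" by simp
  also have "\<dots> \<le> exp m * (1 / \<kappa>)" using exp_int(2)[of \<kappa> x T] kappa_pos xT by (intro mult_left_mono) auto
  finally show ?thesis by simp
qed

lemma K_est: "\<exists>C>0. \<forall>x T. x \<le> T \<longrightarrow> integral {x..T} (P x) \<le> C * dfun q x"
proof -
  obtain \<delta> where dpos: "\<delta> > 0" and dl: "\<And>x. \<bar>x\<bar> \<le> X \<Longrightarrow> dfun q x \<ge> \<delta>" using delta_ex by blast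
  define C1 where "C1 = \<alpha> * (exp 2 + exp (2 + m + \<kappa> * \<beta>) / \<beta> / \<kappa>)"
  define C2 where "C2 = exp m / \<kappa> / \<delta>"
  have C1: "C1 > 0" unfolding C1_def using alpha beta kappa_pos by (auto intro!: mult_pos_pos add_pos_pos divide_pos_pos)
  have C2: "C2 > 0" using dpos kappa_pos by (simp add: C2_def)
  show ?thesis
  proof (intro exI[of _ "C1 + C2"] conjI allI impI)
    show "C1 + C2 > 0" using C1 C2 by simp
    fix x T :: real assume xT: "x \<le> T"
    have dp: "dfun q x > 0" by (rule d_pos)
    show "integral {x..T} (P x) \<le> (C1 + C2) * dfun q x"
    proof (cases "\<bar>x\<bar> \<ge> X")
      case True
      have "integral {x..T} (P x) \<le> C1 * dfun q x" using K_far[OF True xT] by (simp add: C1_def)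
      also have "\<dots> \<le> (C1 + C2) * dfun q x" using C2 dp by (simp add: mult_right_mono)
      finally show ?thesis .
    next
      case False
      have "integral {x..T} (P x) \<le> exp m / \<kappa>" by (rule K_glob[OF xT])
      also have "\<dots> = C2 * \<delta>" using dpos by (simp add: C2_def)
      also have "\<dots> \<le> C2 * dfun q x" using dl[of x] False C2 by (simp add: mult_left_mono)
      also have "\<dots> \<le> (C1 + C2) * dfun q x" using C1 dp by (simp add: mult_right_mono)
      finally show ?thesis .
    qed
  qed
qed

end

lemma leb_sub:
  fixes h :: "real \<Rightarrow> real"
  assumes h: "integrable lebesgue h" and nn: "\<And>t. h t \<ge> 0"
  shows "h integrable_on {u..v}" "integral {u..v} h \<le> (LINT t|lebesgue. h t)"
proof -
  have ai: "h absolutely_integrable_on UNIV" using h by (simp add: set_integrable_def)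
  then have "h absolutely_integrable_on {u..v}" by (rule absolutely_integrable_on_subinterval) auto
  then show hi: "h integrable_on {u..v}" by (rule abs_int_imp_int)
  have "integral {u..v} h \<le> integral UNIV h"
    by (rule integral_subset_le) (use hi abs_int_imp_int[OF ai] nn in auto)
  also have "\<dots> = (LINT t|lebesgue. h t)" by (rule integral_lebesgue[OF h])
  finally show "integral {u..v} h \<le> (LINT t|lebesgue. h t)" .
qed

lemma Lp_small:
  fixes y :: "real \<Rightarrow> real"
  assumes h: "integrable lebesgue (\<lambda>t. \<bar>y t\<bar> powr pr)" and pr: "pr > 0"
  shows "\<exists>T\<ge>T0. \<bar>y T\<bar> \<le> 1"
proof (rule ccontr)
  assume "\<not> ?thesis"
  then have big: "\<And>T. T \<ge> T0 \<Longrightarrow> \<bar>y T\<bar> > 1" by force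
  define I where "I = (LINT t|lebesgue. \<bar>y t\<bar> powr pr)"
  obtain n :: nat where n: "real n > I" using reals_Archimedean2 by blast
  have "integral {T0..T0 + real n} (\<lambda>t. 1::real) \<le> integral {T0..T0 + real n} (\<lambda>t. \<bar>y t\<bar> powr pr)"
  proof (rule integral_le)
    show "(\<lambda>t. \<bar>y t\<bar> powr pr) integrable_on {T0..T0 + real n}" using leb_sub(1)[OF h] by simp
    fix t assume "t \<in> {T0..T0 + real n}"
    then have "\<bar>y t\<bar> > 1" using big by auto
    then show "1 \<le> \<bar>y t\<bar> powr pr" using pr by (simp add: ge_one_powr_ge_zero)
  qed (rule integrable_const_ivl)
  also have "\<dots> \<le> I" unfolding I_def by (rule leb_sub(2)[OF h]) simp
  finally show False using n by simp
qed

lemma holder_interval: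
  fixes P f :: "real \<Rightarrow> real" and pr K :: real
  assumes pr: "pr > 1" and K: "K > 0" and xT: "x \<le> T"
    and Pc: "continuous_on UNIV P" and Ppos: "\<And>t. P t > 0"
    and PK: "integral {x..T} (\<lambda>t. P t powr (pr / (pr - 1))) \<le> K"
    and fa: "f absolutely_integrable_on {x..T}"
    and fp: "(\<lambda>t. \<bar>f t\<bar> powr pr) integrable_on {x..T}"
    and fp1: "integral {x..T} (\<lambda>t. \<bar>f t\<bar> powr pr) \<le> 1"
  shows "(\<lambda>t. P t * \<bar>f t\<bar>) integrable_on {x..T}"
    and "integral {x..T} (\<lambda>t. P t * \<bar>f t\<bar>) \<le> K powr ((pr - 1) / pr)"
proof -
  define r where "r = pr / (pr - 1)"
  have r1: "r > 1" using pr by (simp add: r_def field_simps)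
  have rr: "1 / r + 1 / pr = 1" using pr by (simp add: r_def field_simps)
  define A where "A = K powr ((pr - 1) / pr)"
  have Apos: "A > 0" using K by (simp add: A_def)
  have Ar: "A powr r = K" using K pr by (simp add: A_def powr_powr r_def)
  have fabs: "(\<lambda>t. \<bar>f t\<bar>) absolutely_integrable_on {x..T}"
    using fa by (simp add: absolutely_integrable_abs_iff)
  have Pfa: "(\<lambda>t. \<bar>f t\<bar> * P t) absolutely_integrable_on {x..T}"
    by (rule abs_int_cont_mult[OF continuous_on_subset[OF Pc] fabs]) auto
  then show Pfi: "(\<lambda>t. P t * \<bar>f t\<bar>) integrable_on {x..T}"
    using abs_int_imp_int by (simp add: mult.commute)
  have Pri: "(\<lambda>t. P t powr r) integrable_on {x..T}"
    by (rule integrable_continuous_real) (use Pc Ppos in \<open>auto intro!: continuous_intros continuous_on_subset[OF Pc] simp: less_imp_neq[symmetric]\<close>)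
  have pw: "P t * \<bar>f t\<bar> \<le> (A / K / r) * P t powr r + (A / pr) * \<bar>f t\<bar> powr pr" for t
  proof -
    have "(P t / A) * \<bar>f t\<bar> \<le> (P t / A) powr r / r + \<bar>f t\<bar> powr pr / pr"
      by (rule Youngs_inequality[OF r1 pr rr]) (use Ppos Apos in \<open>auto intro: less_imp_le\<close>)
    also have "(P t / A) powr r = P t powr r / K" using Ppos[of t] Apos Ar by (simp add: powr_divide less_imp_le)
    finally have "(P t / A) * \<bar>f t\<bar> \<le> P t powr r / K / r + \<bar>f t\<bar> powr pr / pr" .
    then have "A * ((P t / A) * \<bar>f t\<bar>) \<le> A * (P t powr r / K / r + \<bar>f t\<bar> powr pr / pr)"
      using Apos by (intro mult_left_mono) auto
    moreover have "A * ((P t / A) * \<bar>f t\<bar>) = P t * \<bar>f t\<bar>" using Apos by simp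
    moreover have "A * (P t powr r / K / r + \<bar>f t\<bar> powr pr / pr) = (A / K / r) * P t powr r + (A / pr) * \<bar>f t\<bar> powr pr"
      using K r1 pr Apos by (simp add: field_simps)
    ultimately show ?thesis by simp
  qed
  have j1: "(\<lambda>t. (A / K / r) * P t powr r) integrable_on {x..T}" by (rule integrable_on_mult_right[OF Pri])
  have j2: "(\<lambda>t. (A / pr) * \<bar>f t\<bar> powr pr) integrable_on {x..T}" by (rule integrable_on_mult_right[OF fp])
  have "integral {x..T} (\<lambda>t. P t * \<bar>f t\<bar>) \<le> integral {x..T} (\<lambda>t. (A / K / r) * P t powr r + (A / pr) * \<bar>f t\<bar> powr pr)"
    by (rule integral_le[OF Pfi integrable_add[OF j1 j2] pw])
  also have "\<dots> = integral {x..T} (\<lambda>t. (A / K / r) * P t powr r) + integral {x..T} (\<lambda>t. (A / pr) * \<bar>f t\<bar> powr pr)"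
    by (rule integral_add[OF j1 j2])
  also have "\<dots> = (A / K / r) * integral {x..T} (\<lambda>t. P t powr r) + (A / pr) * integral {x..T} (\<lambda>t. \<bar>f t\<bar> powr pr)"
    by (simp only: Henstock_Kurzweil_Integration.integral_mult_right)
  also have "\<dots> \<le> (A / K / r) * K + (A / pr) * 1"
    using PK fp1 Apos K r1 pr by (intro add_mono mult_left_mono) (auto simp: r_def)
  also have "\<dots> = A * (1 / r + 1 / pr)" using K by (simp add: field_simps)
  also have "\<dots> = A" using rr by simp
  finally show "integral {x..T} (\<lambda>t. P t * \<bar>f t\<bar>) \<le> K powr ((pr - 1) / pr)" by (simp add: A_def)
qed

lemma ac_const: "ac (\<lambda>t. c) (\<lambda>t. 0)"
  unfolding ac_def by simp

lemma cont_meas: "continuous_on UNIV (h :: real \<Rightarrow> real) \<Longrightarrow> h \<in> borel_measurable lebesgue"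
  using continuous_imp_measurable_on_sets_lebesgue[of UNIV h] by (simp add: lebesgue_on_UNIV_eq)

lemma cs_integrable:
  fixes h :: "real \<Rightarrow> real"
  assumes hc: "continuous_on {u..v} h" and out: "\<And>t. t \<notin> {u..v} \<Longrightarrow> h t = 0"
  shows "integrable lebesgue h" "(LINT t|lebesgue. h t) = integral {u..v} h"
proof -
  have eq: "(\<lambda>t. if t \<in> {u..v} then h t else 0) = h" using out by (auto simp: fun_eq_iff)
  have "h absolutely_integrable_on {u..v}" by (rule absolutely_integrable_continuous_real[OF hc])
  then have "h absolutely_integrable_on UNIV"
    using absolutely_integrable_restrict_UNIV[of "{u..v}" h] eq by simp
  then show hi: "integrable lebesgue h" by (simp add: set_integrable_def)
  have "(LINT t|lebesgue. h t) = integral UNIV h" by (rule integral_lebesgue[OF hi, symmetric])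
  also have "\<dots> = integral {u..v} h" using integral_restrict_UNIV[of "{u..v}" h] eq by simp
  finally show "(LINT t|lebesgue. h t) = integral {u..v} h" .
qed

lemma exp_tail_integrable:
  fixes c x :: real
  assumes c: "c > 0"
  shows "integrable lebesgue (\<lambda>t. indicator {..x} t * exp (c * (t - x)))"
proof -
  define h0 where "h0 t = indicator {0..} t * exp (- c * t)" for t :: real
  have c1: "continuous_on UNIV (\<lambda>t. exp (- c * t))" by (intro continuous_intros)
  have c2: "continuous_on UNIV (\<lambda>t. exp (c * (t - x)))" by (intro continuous_intros)
  have s1: "{0::real..} \<in> sets borel" by simp
  have s2: "{..x} \<in> sets borel" by simp
  have m1: "h0 \<in> borel_measurable lborel"
    unfolding h0_def using borel_measurable_times[OF borel_measurable_indicator[OF s1] borel_measurable_continuous_onI[OF c1]] by simp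
  have m2: "(\<lambda>t. indicator {..x} t * exp (c * (t - x))) \<in> borel_measurable lborel"
    using borel_measurable_times[OF borel_measurable_indicator[OF s2] borel_measurable_continuous_onI[OF c2]] by simp
  have "(\<lambda>t. exp (- c * t)) integrable_on {0..}" by (rule integrable_on_exp_minus_to_infinity[OF c])
  then have "(\<lambda>t. exp (- c * t)) absolutely_integrable_on {0..}"
    by (rule nonnegative_absolutely_integrable_1) simp
  then have "(\<lambda>t. if t \<in> {0..} then exp (- c * t) else 0) absolutely_integrable_on UNIV"
    by (rule iffD2[OF absolutely_integrable_restrict_UNIV])
  then have i0: "integrable lebesgue (\<lambda>t. if t \<in> {0..} then exp (- c * t) else 0)"
    by (simp add: set_integrable_def)
  have eq1: "(\<lambda>t. if t \<in> {0..} then exp (- c * t) else 0) = h0"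
    by (rule ext) (simp add: h0_def indicator_def)
  have "integrable lebesgue h0" using i0 unfolding eq1 .
  then have "integrable lborel h0" using integrable_completion[OF m1] by simp
  then have i1: "integrable lborel (\<lambda>t. h0 (x + (-1) * t))" by (rule lborel_integrable_real_affine) simp
  have eq2: "(\<lambda>t. h0 (x + (-1) * t)) = (\<lambda>t. indicator {..x} t * exp (c * (t - x)))"
  proof (rule ext)
    fix t
    have "- c * (x + (-1) * t) = c * (t - x)" by (simp add: algebra_simps)
    moreover have "(x + (-1) * t \<in> {0..}) = (t \<in> {..x})" by auto
    ultimately show "h0 (x + (-1) * t) = indicator {..x} t * exp (c * (t - x))"
      unfolding h0_def indicator_def by simp
  qed
  have "integrable lborel (\<lambda>t. indicator {..x} t * exp (c * (t - x)))" using i1 unfolding eq2 .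
  then show ?thesis using integrable_completion[OF m2] by simp
qed

context qset2 begin

lemma upper_bound:
  assumes p: "p > (1::ereal)" and y: "y \<in> Dset p q" and C: "C > 0"
    and KC: "\<And>x T. x \<le> T \<Longrightarrow> integral {x..T} (P x) \<le> C * dfun q x"
  shows "\<bar>y x\<bar> \<le> (C * dfun q x) powr (1 / conj_exp p)"
proof -
  from y obtain f where yL: "in_Lp p y" and fL: "in_Lp p f" and fn: "Lp_norm p f = 1"
    and sol: "is_solution q f y" unfolding Dset_def by blast
  have acy: "ac y (\<lambda>t. q t * y t - f t)" using sol unfolding is_solution_def ac_def by blast
  have cy: "continuous_on UNIV y" by (rule ac_cont[OF acy])
  have fai: "f absolutely_integrable_on {u..v}" if uv: "u \<le> v" for u v
  proof -
    have qy: "(\<lambda>t. q t * y t) absolutely_integrable_on {u..v}"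
      by (rule abs_int_cont_mult[OF continuous_on_subset[OF cy] q_loc]) auto
    have "(\<lambda>t. q t * y t - (q t * y t - f t)) absolutely_integrable_on {u..v}"
      by (rule set_integral_diff(1)[OF qy acD(1)[OF acy uv]])
    moreover have "(\<lambda>t. q t * y t - (q t * y t - f t)) = f" by (rule ext) simp
    ultimately show ?thesis by simp
  qed
  have dphi: "\<And>s. ((\<lambda>s. exp (- s)) has_real_derivative - exp (- s)) (at s)"
    by (auto intro!: derivative_eq_intros)
  have cphi: "continuous_on UNIV (\<lambda>s::real. - exp (- s))" by (intro continuous_intros)
  have acS: "ac (\<lambda>t. Pr t + (- Pr x)) (\<lambda>t. q t + 0)" by (rule ac_add[OF ac_Pr ac_const])
  have acP0: "ac (\<lambda>t. exp (- (Pr t + - Pr x))) (\<lambda>t. (q t + 0) * - exp (- (Pr t + - Pr x)))"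
    using ac_chain[OF acS dphi cphi] .
  have acP: "ac (P x) (\<lambda>t. - (q t * P x t))"
    by (rule ac_cong[OF acP0]) (simp_all add: P_def)
  have acPy: "ac (\<lambda>t. P x t * y t) (\<lambda>t. - (q t * P x t) * y t + P x t * (q t * y t - f t))"
    by (rule ac_prod[OF acP acy])
  have acPy': "ac (\<lambda>t. P x t * y t) (\<lambda>t. - (P x t * f t))"
    by (rule ac_cong[OF acPy]) (simp_all add: algebra_simps)
  have Px: "P x x = 1" by (simp add: P_def)
  have Ppos: "\<And>t. P x t > 0" by (simp add: P_def)
  have Ple1: "\<And>t. x \<le> t \<Longrightarrow> P x t \<le> 1" using Pr_mono by (simp add: P_def)
  have Pfa: "(\<lambda>t. f t * P x t) absolutely_integrable_on {x..T}" if "x \<le> T" for T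
    by (rule abs_int_cont_mult[OF P_cont fai[OF that]])
  have Pfabs: "(\<lambda>t. \<bar>f t\<bar> * P x t) absolutely_integrable_on {x..T}" if "x \<le> T" for T
    by (rule abs_int_cont_mult[OF P_cont]) (use fai[OF that] in \<open>simp add: absolutely_integrable_abs_iff\<close>)
  have rep: "y x = P x T * y T + integral {x..T} (\<lambda>t. P x t * f t)" if xT: "x \<le> T" for T
    using acD(2)[OF acPy' xT] Px by simp
  define B where "B = (C * dfun q x) powr (1 / conj_exp p)"
  have dq: "dfun q x > 0" by (rule d_pos)
  have intB: "\<bar>integral {x..T} (\<lambda>t. P x t * f t)\<bar> \<le> B" if xT: "x \<le> T" for T
  proof -
    have i1: "(\<lambda>t. P x t * f t) integrable_on {x..T}"
      using abs_int_imp_int[OF Pfa[OF xT]] by (simp add: mult.commute)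
    have i2: "(\<lambda>t. P x t * \<bar>f t\<bar>) integrable_on {x..T}"
      using abs_int_imp_int[OF Pfabs[OF xT]] by (simp add: mult.commute)
    have "\<bar>integral {x..T} (\<lambda>t. P x t * f t)\<bar> \<le> integral {x..T} (\<lambda>t. P x t * \<bar>f t\<bar>)"
      using integral_norm_bound_integral[OF i1 i2] Ppos by (simp add: abs_mult less_imp_le)
    also have "\<dots> \<le> B"
    proof (cases p)
      case PInf
      have bf: "bounded (range f)" and sf: "(SUP t. \<bar>f t\<bar>) = 1"
        using fL fn PInf by (auto simp: in_Lp_def Lp_norm_def)
      have bdd: "bdd_above (range (\<lambda>t. \<bar>f t\<bar>))"
        using bf unfolding bounded_iff bdd_above_def by (auto simp: real_norm_def)
      have f1: "\<bar>f t\<bar> \<le> 1" for t using cSUP_upper[OF _ bdd, of t] sf by simp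
      have "integral {x..T} (\<lambda>t. P x t * \<bar>f t\<bar>) \<le> integral {x..T} (P x)"
        by (rule integral_le[OF i2 P_int]) (rule mult_left_le[OF f1 less_imp_le[OF Ppos]])
      also have "\<dots> \<le> C * dfun q x" by (rule KC[OF xT])
      also have "\<dots> = B" using PInf C dq by (simp add: B_def conj_exp_def)
      finally show ?thesis .
    next
      case (real pr)
      with p have pr: "pr > 1" by simp
      have pne: "p \<noteq> \<infinity>" using real by simp
      have hi: "integrable lebesgue (\<lambda>t. \<bar>f t\<bar> powr pr)" using fL real by (simp add: in_Lp_def)
      have I1: "(LINT t|lebesgue. \<bar>f t\<bar> powr pr) = 1"
      proof -
        define I where "I = (LINT t|lebesgue. \<bar>f t\<bar> powr pr)"
        have I0: "I \<ge> 0" unfolding I_def by (rule integral_nonneg_AE) simp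
        have "I powr (1 / pr) = 1" using fn real by (simp add: Lp_norm_def I_def)
        then have "(I powr (1 / pr)) powr pr = 1" by simp
        then show ?thesis using I0 pr by (simp add: powr_powr I_def)
      qed
      have KP: "integral {x..T} (\<lambda>t. P x t powr (pr / (pr - 1))) \<le> C * dfun q x"
      proof -
        have "integral {x..T} (\<lambda>t. P x t powr (pr / (pr - 1))) \<le> integral {x..T} (P x)"
        proof (rule integral_le)
          show "(\<lambda>t. P x t powr (pr / (pr - 1))) integrable_on {x..T}"
            by (rule integrable_continuous_real) (use Ppos in \<open>auto intro!: continuous_intros continuous_on_subset[OF P_cont] simp: less_imp_neq[symmetric]\<close>)
          fix t assume "t \<in> {x..T}"
          then have "P x t \<le> 1" using Ple1 by simp
          moreover have "1 \<le> pr / (pr - 1)" using pr by (simp add: field_simps)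
          ultimately have "P x t powr (pr / (pr - 1)) \<le> P x t powr 1"
            using Ppos[of t] by (intro powr_mono') auto
          then show "P x t powr (pr / (pr - 1)) \<le> P x t" using Ppos[of t] by simp
        qed (rule P_int)
        also have "\<dots> \<le> C * dfun q x" by (rule KC[OF xT])
        finally show ?thesis .
      qed
      have "integral {x..T} (\<lambda>t. P x t * \<bar>f t\<bar>) \<le> (C * dfun q x) powr ((pr - 1) / pr)"
        by (rule holder_interval(2)[OF pr _ xT P_cont Ppos KP fai[OF xT] leb_sub(1)[OF hi]])
           (use C dq leb_sub(2)[OF hi, of x T] I1 in auto)
      also have "\<dots> = B" using real pr by (simp add: B_def conj_exp_def)
      finally show ?thesis .
    next
      case MInf then show ?thesis using p by simp
    qed
    finally show ?thesis .
  qed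
  obtain M where M: "M > 0" "\<And>T0. \<exists>T\<ge>T0. \<bar>y T\<bar> \<le> M"
  proof (cases p)
    case PInf
    have "bounded (range y)" using yL PInf by (simp add: in_Lp_def)
    then obtain M0 where "\<And>t. \<bar>y t\<bar> \<le> M0" unfolding bounded_iff by auto
    then show ?thesis
    proof (intro that[of "max M0 1"])
      fix T0 show "\<exists>T\<ge>T0. \<bar>y T\<bar> \<le> max M0 1" using \<open>\<And>t. \<bar>y t\<bar> \<le> M0\<close>[of T0]
        by (intro exI[of _ T0]) simp
    qed simp
  next
    case (real pr)
    with p have pr: "pr > 1" by simp
    have hi: "integrable lebesgue (\<lambda>t. \<bar>y t\<bar> powr pr)" using yL real by (simp add: in_Lp_def)
    show ?thesis by (rule that[of 1]) (use Lp_small[OF hi] pr in auto)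
  next
    case MInf then show ?thesis using p by simp
  qed
  have "\<bar>y x\<bar> \<le> B + e" if e: "e > 0" for e
  proof -
    define T0 where "T0 = x + max 0 ((m + ln (M / e)) / \<kappa>)"
    obtain T where T: "T \<ge> T0" "\<bar>y T\<bar> \<le> M" using M(2) by blast
    have xT: "x \<le> T" using T(1) by (simp add: T0_def)
    have "\<kappa> * (T - x) \<ge> m + ln (M / e)"
    proof -
      have "T - x \<ge> (m + ln (M / e)) / \<kappa>" using T(1) by (simp add: T0_def)
      then show ?thesis using kappa_pos by (simp add: field_simps)
    qed
    then have "m + (- \<kappa> * (T - x)) \<le> - ln (M / e)" by simp
    then have "exp (m + (- \<kappa> * (T - x))) \<le> exp (- ln (M / e))" by simp
    also have "\<dots> = e / M" using M(1) e by (simp add: exp_minus)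
    finally have ex0: "exp (m + (- \<kappa> * (T - x))) \<le> e / M" .
    have "exp m * exp (- \<kappa> * (T - x)) = exp (m + (- \<kappa> * (T - x)))" by (simp only: exp_add)
    with ex0 have ex: "exp m * exp (- \<kappa> * (T - x)) \<le> e / M" by simp
    have "P x T * \<bar>y T\<bar> \<le> (exp m * exp (- \<kappa> * (T - x))) * M"
      using P_global[OF xT] T(2) Ppos[of T] by (intro mult_mono) auto
    also have "\<dots> \<le> (e / M) * M" using ex M(1) by (intro mult_right_mono) auto
    also have "\<dots> = e" using M(1) by simp
    finally have tail: "P x T * \<bar>y T\<bar> \<le> e" .
    have "\<bar>y x\<bar> \<le> \<bar>P x T * y T\<bar> + \<bar>integral {x..T} (\<lambda>t. P x t * f t)\<bar>"
      using rep[OF xT] by linarith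
    also have "\<dots> \<le> e + B" using tail intB[OF xT] Ppos[of T] by (simp add: abs_mult)
    finally show ?thesis by simp
  qed
  then have "\<bar>y x\<bar> \<le> B" by (rule field_le_epsilon)
  then show ?thesis by (simp add: B_def)
qed

end

lemma ac_prim:
  fixes g :: "real \<Rightarrow> real"
  assumes ai: "\<And>u v. g absolutely_integrable_on {u..v}"
  shows "ac (\<lambda>t. if 0 \<le> t then integral {0..t} g else - integral {t..0} g) g"
  unfolding ac_def
proof (intro allI impI conjI)
  fix u v :: real assume uv: "u \<le> v"
  show "g absolutely_integrable_on {u..v}" by (rule ai)
  have gi: "\<And>u v. g integrable_on {u..v}" using abs_int_imp_int[OF ai] .
  consider "0 \<le> u" | "u < 0" "0 \<le> v" | "v < 0" by linarith
  then show "integral {u..v} g = (if 0 \<le> v then integral {0..v} g else - integral {v..0} g) -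
      (if 0 \<le> u then integral {0..u} g else - integral {u..0} g)"
  proof cases
    case 1 then show ?thesis
      using Henstock_Kurzweil_Integration.integral_combine[OF 1 uv gi] uv by simp
  next
    case 2 then show ?thesis
      using Henstock_Kurzweil_Integration.integral_combine[of u 0 v g] gi by simp
  next
    case 3 then show ?thesis
      using Henstock_Kurzweil_Integration.integral_combine[of u v 0 g] gi uv by simp
  qed
qed

lemma integral_zero_on:
  fixes g :: "real \<Rightarrow> real"
  assumes "\<And>t. t \<in> {u..v} \<Longrightarrow> g t = 0"
  shows "integral {u..v} g = 0"
proof -
  have "integral {u..v} g = integral {u..v} (\<lambda>t. 0::real)" by (rule integral_cong) (use assms in auto)
  then show ?thesis by simp
qed

context qset2 begin

definition "dd x = dfun q x"
definition "psi x t = max 0 (min (t - x) (x + dd x - t))"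
definition "Pg x t = (if 0 \<le> t then integral {0..t} (psi x) else - integral {t..0} (psi x))"
definition "Psi x t = Pg x (x + dd x) - Pg x t"
definition "Et x t = exp (Pr t - Pr x)"
definition "Y0 x t = Et x t * Psi x t"
definition "F0 x t = Et x t * psi x t"

lemma dd_pos: "dd x > 0" unfolding dd_def by (rule d_pos)

lemma psi_cont: "continuous_on S (psi x)"
  unfolding psi_def by (intro continuous_intros)

lemma psi_nn: "psi x t \<ge> 0" unfolding psi_def by simp

lemma psi_le: "psi x t \<le> dd x / 2"
  unfolding psi_def using dd_pos[of x] by (auto simp: max_def min_def)

lemma psi_out: "t \<le> x \<or> x + dd x \<le> t \<Longrightarrow> psi x t = 0"
  unfolding psi_def by (auto simp: max_def min_def)

lemma psi_mid: "x + dd x / 4 \<le> t \<Longrightarrow> t \<le> x + 3 * dd x / 4 \<Longrightarrow> psi x t \<ge> dd x / 4"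
  unfolding psi_def by (auto simp: max_def min_def)

lemma psi_ai: "psi x absolutely_integrable_on {u..v}"
  by (rule absolutely_integrable_continuous_real[OF psi_cont])

lemma psi_int: "psi x integrable_on {u..v}"
  by (rule integrable_continuous_real[OF psi_cont])

lemma ac_Pg: "ac (Pg x) (psi x)"
  unfolding Pg_def[abs_def] by (rule ac_prim[OF psi_ai])

lemma Pg_diff: "u \<le> v \<Longrightarrow> Pg x v - Pg x u = integral {u..v} (psi x)"
  using acD(2)[OF ac_Pg] by simp

lemma ac_Psi: "ac (Psi x) (\<lambda>t. - psi x t)"
proof -
  have "ac (\<lambda>t. Pg x (x + dd x) + (-1) * Pg x t) (\<lambda>t. 0 + (-1) * psi x t)"
    by (rule ac_add[OF ac_const ac_cmult[OF ac_Pg]])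
  then show ?thesis by (rule ac_cong) (simp_all add: Psi_def)
qed

definition "Psx x = integral {x..x + dd x} (psi x)"

lemma Psi_x: "Psi x x = Psx x"
  unfolding Psi_def Psx_def using Pg_diff[of x "x + dd x"] dd_pos[of x] by simp

lemma Psx_lb: "Psx x \<ge> dd x ^ 2 / 8"
proof -
  have d: "dd x > 0" by (rule dd_pos)
  have "integral {x + dd x / 4..x + 3 * dd x / 4} (\<lambda>t. dd x / 4) \<le> integral {x + dd x / 4..x + 3 * dd x / 4} (psi x)"
    by (rule integral_le[OF integrable_const_ivl psi_int]) (use psi_mid in auto)
  also have "\<dots> \<le> integral {x..x + dd x} (psi x)"
    by (rule integral_subset_le[OF _ psi_int psi_int]) (use d psi_nn in auto)
  finally have "integral {x + dd x / 4..x + 3 * dd x / 4} (\<lambda>t. dd x / 4) \<le> Psx x" unfolding Psx_def .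
  moreover have "integral {x + dd x / 4..x + 3 * dd x / 4} (\<lambda>t. dd x / 4) = dd x ^ 2 / 8"
    using less_imp_le[OF d] by (simp add: power2_eq_square field_simps)
  ultimately show ?thesis by linarith
qed

lemma Psi_props: "0 \<le> Psi x t" "Psi x t \<le> Psx x" "x + dd x \<le> t \<Longrightarrow> Psi x t = 0"
proof -
  have d: "dd x > 0" by (rule dd_pos)
  have P0: "Psx x \<ge> 0" unfolding Psx_def by (rule integral_nonneg[OF psi_int]) (simp add: psi_nn)
  have "0 \<le> Psi x t \<and> Psi x t \<le> Psx x \<and> (x + dd x \<le> t \<longrightarrow> Psi x t = 0)"
  proof (cases "x + dd x \<le> t")
    case True
    have "Psi x t = - integral {x + dd x..t} (psi x)"
      unfolding Psi_def using Pg_diff[where x=x, OF True] by simp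
    also have "integral {x + dd x..t} (psi x) = 0" by (rule integral_zero_on) (use psi_out in auto)
    finally show ?thesis using P0 by simp
  next
    case False
    show ?thesis
    proof (cases "x \<le> t")
      case True
      have e: "Psi x t = integral {t..x + dd x} (psi x)"
        unfolding Psi_def using Pg_diff[of t "x + dd x"] False by simp
      have "integral {t..x + dd x} (psi x) \<le> integral {x..x + dd x} (psi x)"
        by (rule integral_subset_le[OF _ psi_int psi_int]) (use True psi_nn in auto)
      moreover have "integral {t..x + dd x} (psi x) \<ge> 0" by (rule integral_nonneg[OF psi_int]) (simp add: psi_nn)
      ultimately show ?thesis using e False by (simp add: Psx_def)
    next
      case f2: False
      have "Psi x t = (Pg x (x + dd x) - Pg x x) + (Pg x x - Pg x t)" unfolding Psi_def by simp
      also have "Pg x x - Pg x t = integral {t..x} (psi x)" using Pg_diff[of t x] f2 by simp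
      also have "integral {t..x} (psi x) = 0" by (rule integral_zero_on) (use psi_out in auto)
      also have "Pg x (x + dd x) - Pg x x = Psx x" unfolding Psx_def using Pg_diff[of x "x + dd x"] d by simp
      finally show ?thesis using P0 False by simp
    qed
  qed
  then show "0 \<le> Psi x t" "Psi x t \<le> Psx x" "x + dd x \<le> t \<Longrightarrow> Psi x t = 0" by auto
qed

lemma ac_Et: "ac (Et x) (\<lambda>t. q t * Et x t)"
proof -
  have acS: "ac (\<lambda>t. Pr t + (- Pr x)) (\<lambda>t. q t + 0)" by (rule ac_add[OF ac_Pr ac_const])
  have d: "\<And>s. (exp has_real_derivative exp s) (at s)" by (rule DERIV_exp)
  have c: "continuous_on UNIV (exp :: real \<Rightarrow> real)" by (intro continuous_intros)
  have "ac (\<lambda>t. exp (Pr t + - Pr x)) (\<lambda>t. (q t + 0) * exp (Pr t + - Pr x))"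
    by (rule ac_chain[OF acS d c])
  then show ?thesis by (rule ac_cong) (simp_all add: Et_def)
qed

lemma Et_pos: "Et x t > 0" by (simp add: Et_def)
lemma Et_x: "Et x x = 1" by (simp add: Et_def)
lemma Et_ge1: "x \<le> t \<Longrightarrow> Et x t \<ge> 1" using Pr_mono[of x t] by (simp add: Et_def)
lemma Et_le: "t \<le> x + dd x \<Longrightarrow> Et x t \<le> exp 2"
proof -
  assume t: "t \<le> x + dd x"
  have "Pr t \<le> Pr (x + dd x)" by (rule Pr_mono[OF t])
  moreover have "Pr (x - dd x) \<le> Pr x" by (rule Pr_mono) (use dd_pos[of x] in simp)
  moreover have "Pr (x + dd x) - Pr (x - dd x) = 2" unfolding dd_def by (rule d_eq)
  ultimately have "Pr t - Pr x \<le> 2" by linarith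
  then show ?thesis by (simp add: Et_def)
qed
lemma Et_left: "t \<le> x \<Longrightarrow> Et x t \<le> exp m * exp (\<kappa> * (t - x))"
proof -
  assume t: "t \<le> x"
  have "Pr x - Pr t \<ge> m * ((x - t) / (2*a) - 1)" by (rule global_lower[OF t])
  moreover have "m * ((x - t) / (2*a) - 1) = - (\<kappa> * (t - x)) - m"
    using a_pos by (simp add: \<kappa>_def field_simps)
  ultimately have "Pr t - Pr x \<le> m + \<kappa> * (t - x)" by linarith
  then have "Et x t \<le> exp (m + \<kappa> * (t - x))" by (simp add: Et_def)
  then show ?thesis by (simp add: exp_add)
qed

lemma ac_Y0: "ac (Y0 x) (\<lambda>t. q t * Y0 x t - F0 x t)"
proof -
  have "ac (\<lambda>t. Et x t * Psi x t) (\<lambda>t. q t * Et x t * Psi x t + Et x t * - psi x t)"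
    by (rule ac_prod[OF ac_Et ac_Psi])
  then show ?thesis by (rule ac_cong) (simp_all add: Y0_def F0_def algebra_simps)
qed

lemma Et_cont: "continuous_on S (Et x)"
  using continuous_on_subset[OF ac_cont[OF ac_Et]] by blast

lemma F0_cont: "continuous_on S (F0 x)"
  unfolding F0_def[abs_def] by (intro continuous_on_mult Et_cont psi_cont)

lemma Y0_cont: "continuous_on S (Y0 x)"
  using continuous_on_subset[OF ac_cont[OF ac_Y0]] by blast

lemma F0_nn: "F0 x t \<ge> 0" unfolding F0_def using Et_pos[of x t] psi_nn[of x t] by simp

lemma F0_out: "t \<notin> {x..x + dd x} \<Longrightarrow> F0 x t = 0"
  unfolding F0_def using psi_out[of t x] by auto

lemma F0_le: "F0 x t \<le> exp 2 * (dd x / 2)"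
proof (cases "t \<le> x + dd x")
  case True
  show ?thesis unfolding F0_def
    by (rule mult_mono[OF Et_le[OF True] psi_le]) (use psi_nn in auto)
next
  case False then show ?thesis using F0_out[of t x] dd_pos[of x] by simp
qed

lemma F0_mid: "x + dd x / 4 \<le> t \<Longrightarrow> t \<le> x + 3 * dd x / 4 \<Longrightarrow> F0 x t \<ge> dd x / 4"
proof -
  assume t: "x + dd x / 4 \<le> t" "t \<le> x + 3 * dd x / 4"
  have "Et x t \<ge> 1" by (rule Et_ge1) (use t dd_pos[of x] in simp)
  moreover have "psi x t \<ge> dd x / 4" by (rule psi_mid[OF t])
  ultimately have "1 * (dd x / 4) \<le> Et x t * psi x t"
    by (intro mult_mono) (use dd_pos[of x] in auto)
  then show ?thesis by (simp add: F0_def)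
qed

lemma Y0_nn: "Y0 x t \<ge> 0" unfolding Y0_def using Et_pos[of x t] Psi_props(1)[of x t] by simp
lemma Y0_x: "Y0 x x = Psx x" unfolding Y0_def by (simp add: Et_x Psi_x)
lemma Y0_le: "Y0 x t \<le> exp 2 * Psx x"
proof (cases "t \<le> x + dd x")
  case True
  show ?thesis unfolding Y0_def
    by (rule mult_mono[OF Et_le[OF True] Psi_props(2)]) (use Psi_props(1) in auto)
next
  case False
  have "Psx x \<ge> 0" using Psi_props(1)[of x x] Psi_props(2)[of x x] by linarith
  then show ?thesis using Psi_props(3)[of x t] False by (simp add: Y0_def)
qed

lemma Y0_dom: "Y0 x t \<le> (Psx x * max (exp m) (exp 2) * exp (\<kappa> * dd x)) * (indicator {..x + dd x} t * exp (\<kappa> * (t - (x + dd x))))"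
proof -
  define B0 where "B0 = Psx x * max (exp m) (exp 2) * exp (\<kappa> * dd x)"
  have P0: "Psx x \<ge> 0" using Psi_props(1)[of x x] Psi_props(2)[of x x] by linarith
  have key: "exp (\<kappa> * dd x) * exp (\<kappa> * (t - (x + dd x))) = exp (\<kappa> * (t - x))"
    by (simp add: exp_add[symmetric] algebra_simps)
  consider "t \<le> x" | "x < t" "t \<le> x + dd x" | "x + dd x < t" by linarith
  then have "Y0 x t \<le> B0 * (indicator {..x + dd x} t * exp (\<kappa> * (t - (x + dd x))))"
  proof cases
    case 1
    have "Y0 x t \<le> Et x t * Psx x" unfolding Y0_def
      by (rule mult_left_mono[OF Psi_props(2)]) (use Et_pos[of x t] in simp)
    also have "\<dots> \<le> (exp m * exp (\<kappa> * (t - x))) * Psx x"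
      by (rule mult_right_mono[OF Et_left[OF 1] P0])
    also have "\<dots> \<le> (max (exp m) (exp 2) * exp (\<kappa> * (t - x))) * Psx x"
      by (intro mult_right_mono P0) auto
    also have "\<dots> = B0 * (indicator {..x + dd x} t * exp (\<kappa> * (t - (x + dd x))))"
      using 1 dd_pos[of x] key[symmetric] by (simp add: B0_def indicator_def algebra_simps)
    finally show ?thesis .
  next
    case 2
    have "Y0 x t \<le> exp 2 * Psx x" by (rule Y0_le)
    also have "\<dots> \<le> max (exp m) (exp 2) * exp (\<kappa> * (t - x)) * Psx x"
    proof -
      have "exp (\<kappa> * (t - x)) \<ge> 1" using 2 kappa_pos by simp
      then have "exp 2 * 1 \<le> max (exp m) (exp 2) * exp (\<kappa> * (t - x))"
        by (intro mult_mono) (auto simp: le_max_iff_disj)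
      then show ?thesis using mult_right_mono[OF _ P0] by simp
    qed
    also have "\<dots> = B0 * (indicator {..x + dd x} t * exp (\<kappa> * (t - (x + dd x))))"
      using 2 key[symmetric] by (simp add: B0_def indicator_def algebra_simps)
    finally show ?thesis .
  next
    case 3
    then have "Y0 x t = 0" using Psi_props(3)[of x t] by (simp add: Y0_def)
    then show ?thesis using 3 by (simp add: indicator_def)
  qed
  then show ?thesis by (simp add: B0_def)
qed

end

context qset2 begin

lemma build_sol:
  assumes lam: "lam > 0"
  shows "is_solution q (\<lambda>t. lam * F0 x t) (\<lambda>t. lam * Y0 x t)"
proof -
  have "ac (\<lambda>t. lam * Y0 x t) (\<lambda>t. lam * (q t * Y0 x t - F0 x t))" by (rule ac_cmult[OF ac_Y0])
  then have "ac (\<lambda>t. lam * Y0 x t) (\<lambda>t. q t * (lam * Y0 x t) - lam * F0 x t)"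
    by (rule ac_cong) (simp_all add: algebra_simps)
  then show ?thesis unfolding is_solution_def ac_def by blast
qed

lemma lower_inf:
  "\<exists>y\<in>Dset \<infinity> q. inverse (4 * exp 2) * dfun q x powr (1 / conj_exp \<infinity>) \<le> \<bar>y x\<bar>"
proof -
  define d where "d = dd x"
  have d: "d > 0" unfolding d_def by (rule dd_pos)
  have P0: "Psx x \<ge> 0" using Psi_props(1)[of x x] Psi_props(2)[of x x] by linarith
  have ne: "{x..x + dd x} \<noteq> {}" using dd_pos[of x] by simp
  obtain t0 where t0: "t0 \<in> {x..x + dd x}" and tmax: "\<forall>s\<in>{x..x + dd x}. F0 x s \<le> F0 x t0"
    using continuous_attains_sup[OF compact_Icc ne F0_cont] by blast
  define N where "N = F0 x t0"
  have Nmax: "F0 x s \<le> N" for s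
  proof (cases "s \<in> {x..x + dd x}")
    case True then show ?thesis using tmax by (simp add: N_def)
  next
    case False then show ?thesis using F0_out[OF False] F0_nn[of x t0] by (simp add: N_def)
  qed
  have "F0 x (x + d / 2) \<ge> d / 4" using F0_mid[of x "x + d/2"] d by (simp add: d_def)
  then have Npos: "N > 0" using Nmax[of "x + d/2"] d by simp
  have Nle: "N \<le> exp 2 * (d / 2)" using F0_le[of x t0] by (simp add: N_def d_def)
  define lam where "lam = 1 / N"
  have lam: "lam > 0" using Npos by (simp add: lam_def)
  define f where "f t = lam * F0 x t" for t
  define y where "y t = lam * Y0 x t" for t
  have sol: "is_solution q f y" unfolding f_def[abs_def] y_def[abs_def] by (rule build_sol[OF lam])
  have fabs: "\<bar>f t\<bar> \<le> 1" for t
  proof -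
    have "\<bar>f t\<bar> = F0 x t / N" using F0_nn[of x t] lam by (simp add: f_def lam_def)
    also have "\<dots> \<le> 1" using Nmax[of t] Npos by simp
    finally show ?thesis .
  qed
  have ft0: "\<bar>f t0\<bar> = 1" using Npos by (simp add: f_def lam_def N_def)
  have fc: "continuous_on UNIV f" unfolding f_def[abs_def] by (intro continuous_on_mult continuous_on_const F0_cont)
  have yc: "continuous_on UNIV y" unfolding y_def[abs_def] by (intro continuous_on_mult continuous_on_const Y0_cont)
  have fL: "in_Lp \<infinity> f" unfolding in_Lp_def using fc fabs by (auto simp: bounded_iff)
  have yb: "\<bar>y t\<bar> \<le> lam * (exp 2 * Psx x)" for t
    using Y0_nn[of x t] Y0_le[of x t] lam by (simp add: y_def)
  have yL: "in_Lp \<infinity> y" unfolding in_Lp_def using yc yb by (auto simp: bounded_iff)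
  have "(SUP t. \<bar>f t\<bar>) = 1"
    by (rule cSup_eq_maximum) (use ft0 fabs in \<open>auto intro: range_eqI[of _ _ t0]\<close>)
  then have fn: "Lp_norm \<infinity> f = 1" by (simp add: Lp_norm_def)
  have yD: "y \<in> Dset \<infinity> q" unfolding Dset_def using yL fL fn sol by blast
  have "\<bar>y x\<bar> = Psx x / N" using Y0_x[of x] Y0_nn[of x x] Npos by (simp add: y_def lam_def)
  moreover have "Psx x / N \<ge> (d ^ 2 / 8) / (exp 2 * (d / 2))"
    using Psx_lb[of x] Npos Nle d P0 by (intro frac_le) (auto simp: d_def)
  moreover have "(d ^ 2 / 8) / (exp 2 * (d / 2)) = inverse (4 * exp 2) * d powr (1 / conj_exp \<infinity>)"
    using d by (simp add: conj_exp_def power2_eq_square field_simps)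
  ultimately have "inverse (4 * exp 2) * d powr (1 / conj_exp \<infinity>) \<le> \<bar>y x\<bar>" by linarith
  then have "inverse (4 * exp 2) * dfun q x powr (1 / conj_exp \<infinity>) \<le> \<bar>y x\<bar>" by (simp add: d_def dd_def)
  then show ?thesis using yD by blast
qed

lemma lower_fin:
  assumes pr: "pr > 1"
  shows "\<exists>y\<in>Dset (ereal pr) q. inverse (4 * exp 2) * dfun q x powr (1 / conj_exp (ereal pr)) \<le> \<bar>y x\<bar>"
proof -
  define d where "d = dd x"
  have d: "d > 0" unfolding d_def by (rule dd_pos)
  have P0: "Psx x \<ge> 0" using Psi_props(1)[of x x] Psi_props(2)[of x x] by linarith
  define h where "h t = F0 x t powr pr" for t
  have hc: "continuous_on S h" for S
    unfolding h_def[abs_def] using pr F0_nn[of x]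
    by (intro continuous_on_powr' F0_cont continuous_on_const) auto
  have hout: "t \<notin> {x..x + dd x} \<Longrightarrow> h t = 0" for t using F0_out[of t x] by (simp add: h_def)
  have hi: "integrable lebesgue h" and hI: "(LINT t|lebesgue. h t) = integral {x..x + dd x} h"
    using cs_integrable[OF hc hout] by auto
  have hint: "h integrable_on {u..v}" for u v by (rule integrable_continuous_real[OF hc])
  define I where "I = integral {x..x + dd x} h"
  define C0 where "C0 = (exp 2 * (d / 2)) powr pr"
  have hle: "h t \<le> C0" for t
    unfolding h_def C0_def using F0_nn[of x t] F0_le[of x t] pr by (intro powr_mono2) (auto simp: d_def)
  have Ile: "I \<le> C0 * d"
  proof -
    have "I \<le> integral {x..x + dd x} (\<lambda>t. C0)" unfolding I_def
      by (rule integral_le[OF hint integrable_const_ivl]) (use hle in auto)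
    also have "\<dots> = C0 * d" using d by (simp add: d_def)
    finally show ?thesis .
  qed
  have Ige: "I \<ge> (d / 4) powr pr * (d / 2)"
  proof -
    have "integral {x + d / 4..x + 3 * d / 4} (\<lambda>t. (d / 4) powr pr) \<le> integral {x + d / 4..x + 3 * d / 4} h"
    proof (rule integral_le[OF integrable_const_ivl hint])
      fix t assume t: "t \<in> {x + d / 4..x + 3 * d / 4}"
      have "F0 x t \<ge> d / 4" using F0_mid[of x t] t by (simp add: d_def)
      then show "(d / 4) powr pr \<le> h t" unfolding h_def using d pr by (intro powr_mono2) auto
    qed
    also have "\<dots> \<le> I" unfolding I_def
      by (rule integral_subset_le[OF _ hint hint]) (use d F0_nn in \<open>auto simp: h_def d_def\<close>)
    finally have "integral {x + d / 4..x + 3 * d / 4} (\<lambda>t. (d / 4) powr pr) \<le> I" .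
    moreover have "integral {x + d / 4..x + 3 * d / 4} (\<lambda>t. (d / 4) powr pr) = (d / 4) powr pr * (d / 2)"
      using less_imp_le[OF d] by (simp add: field_simps)
    ultimately show ?thesis by linarith
  qed
  have Ipos: "I > 0" using Ige d by (smt (verit) divide_pos_pos mult_pos_pos powr_gt_zero)
  define N where "N = I powr (1 / pr)"
  have Npos: "N > 0" using Ipos by (simp add: N_def)
  define lam where "lam = 1 / N"
  have lam: "lam > 0" using Npos by (simp add: lam_def)
  define f where "f t = lam * F0 x t" for t
  define y where "y t = lam * Y0 x t" for t
  have sol: "is_solution q f y" unfolding f_def[abs_def] y_def[abs_def] by (rule build_sol[OF lam])
  have fc: "continuous_on UNIV f" unfolding f_def[abs_def] by (intro continuous_on_mult continuous_on_const F0_cont)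
  have yc: "continuous_on UNIV y" unfolding y_def[abs_def] by (intro continuous_on_mult continuous_on_const Y0_cont)
  have feq: "(\<lambda>t. \<bar>f t\<bar> powr pr) = (\<lambda>t. lam powr pr * h t)"
  proof (rule ext)
    fix t
    have "\<bar>f t\<bar> = lam * F0 x t" using lam F0_nn[of x t] by (simp add: f_def)
    then show "\<bar>f t\<bar> powr pr = lam powr pr * h t"
      using lam F0_nn[of x t] by (simp add: h_def powr_mult)
  qed
  have fpi: "integrable lebesgue (\<lambda>t. \<bar>f t\<bar> powr pr)" unfolding feq using hi by simp
  have fL: "in_Lp (ereal pr) f" unfolding in_Lp_def using cont_meas[OF fc] fpi by simp
  have "(LINT t|lebesgue. \<bar>f t\<bar> powr pr) = lam powr pr * I" unfolding feq using hI by (simp add: I_def)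
  then have "Lp_norm (ereal pr) f = (lam powr pr * I) powr (1 / pr)" by (simp add: Lp_norm_def)
  also have "\<dots> = lam * N" using lam Ipos pr by (simp add: powr_mult powr_powr N_def)
  also have "\<dots> = 1" using Npos by (simp add: lam_def)
  finally have fn: "Lp_norm (ereal pr) f = 1" .
  define B0 where "B0 = Psx x * max (exp m) (exp 2) * exp (\<kappa> * dd x)"
  define G where "G t = (lam * B0) powr pr * (indicator {..x + dd x} t * exp ((pr * \<kappa>) * (t - (x + dd x))))" for t
  have Gi: "integrable lebesgue G"
    unfolding G_def[abs_def] using exp_tail_integrable[of "pr * \<kappa>" "x + dd x"] pr kappa_pos by simp
  have yG: "norm (\<bar>y t\<bar> powr pr) \<le> norm (G t)" for t
  proof -
    have B0: "B0 \<ge> 0" unfolding B0_def using P0 by (intro mult_nonneg_nonneg) (auto simp: le_max_iff_disj)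
    have yy: "\<bar>y t\<bar> = lam * Y0 x t" using lam Y0_nn[of x t] by (simp add: y_def)
    have Gn: "G t \<ge> 0" using B0 lam by (simp add: G_def)
    show ?thesis
    proof (cases "t \<le> x + dd x")
      case True
      have "lam * Y0 x t \<le> lam * (B0 * exp (\<kappa> * (t - (x + dd x))))"
        using Y0_dom[of x t] True lam by (intro mult_left_mono) (auto simp: B0_def)
      then have "(lam * Y0 x t) powr pr \<le> (lam * B0 * exp (\<kappa> * (t - (x + dd x)))) powr pr"
        using lam Y0_nn[of x t] pr by (intro powr_mono2) (auto simp: mult.assoc)
      also have "\<dots> = (lam * B0) powr pr * exp ((pr * \<kappa>) * (t - (x + dd x)))"
        using lam B0 by (simp add: powr_mult exp_powr_real algebra_simps)
      also have "\<dots> = G t" using True by (simp add: G_def)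
      finally show ?thesis using yy Gn by simp
    next
      case False
      then have "Y0 x t = 0" using Psi_props(3)[of x t] by (simp add: Y0_def)
      then show ?thesis using yy Gn pr by simp
    qed
  qed
  have ypi: "integrable lebesgue (\<lambda>t. \<bar>y t\<bar> powr pr)"
  proof (rule Bochner_Integration.integrable_bound[OF Gi])
    show "(\<lambda>t. \<bar>y t\<bar> powr pr) \<in> borel_measurable lebesgue"
        using cont_meas[OF continuous_on_powr'[OF continuous_on_rabs[OF yc] continuous_on_const, of pr]] pr by simp
    show "AE t in lebesgue. norm (\<bar>y t\<bar> powr pr) \<le> norm (G t)" using yG by simp
  qed
  have yL: "in_Lp (ereal pr) y" unfolding in_Lp_def using cont_meas[OF yc] ypi by simp
  have yD: "y \<in> Dset (ereal pr) q" unfolding Dset_def using yL fL fn sol by blast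
  have Nle: "N \<le> exp 2 * (d / 2) * d powr (1 / pr)"
  proof -
    have "N \<le> (C0 * d) powr (1 / pr)" unfolding N_def
      using Ile Ipos pr by (intro powr_mono2) auto
    also have "\<dots> = exp 2 * (d / 2) * d powr (1 / pr)"
      using d pr by (simp add: C0_def powr_mult powr_powr)
    finally show ?thesis .
  qed
  have "\<bar>y x\<bar> = Psx x / N" using Y0_x[of x] Y0_nn[of x x] Npos by (simp add: y_def lam_def)
  moreover have "Psx x / N \<ge> (d ^ 2 / 8) / (exp 2 * (d / 2) * d powr (1 / pr))"
    using Psx_lb[of x] Npos Nle d P0 by (intro frac_le) (auto simp: d_def)
  moreover have "(d ^ 2 / 8) / (exp 2 * (d / 2) * d powr (1 / pr)) = inverse (4 * exp 2) * d powr (1 / conj_exp (ereal pr))"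
  proof -
    have ce: "1 / conj_exp (ereal pr) = 1 - 1 / pr" using pr by (simp add: conj_exp_def field_simps)
    have "d powr (1 - 1 / pr) = d / d powr (1 / pr)" using d by (simp add: powr_diff)
    then show ?thesis unfolding ce using d by (simp add: power2_eq_square field_simps)
  qed
  ultimately have "inverse (4 * exp 2) * d powr (1 / conj_exp (ereal pr)) \<le> \<bar>y x\<bar>" by linarith
  then have "inverse (4 * exp 2) * dfun q x powr (1 / conj_exp (ereal pr)) \<le> \<bar>y x\<bar>" by (simp add: d_def dd_def)
  then show ?thesis using yD by blast
qed

lemma lower_bound:
  assumes p: "p > (1::ereal)"
  shows "\<exists>y\<in>Dset p q. inverse (4 * exp 2) * dfun q x powr (1 / conj_exp p) \<le> \<bar>y x\<bar>"
proof (cases p)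
  case PInf then show ?thesis using lower_inf by simp
next
  case (real pr) then show ?thesis using lower_fin[of pr] p by simp
next
  case MInf then show ?thesis using p by simp
qed

end

theorem theorem1p5:
  fixes q :: "real \<Rightarrow> real" and a \<alpha> \<beta> X :: real
  assumes q_nonneg: "\<And>t. q t \<ge> 0"
    and q_loc: "\<And>u v. q absolutely_integrable_on {u..v}"
    and a_pos: "a > 0"
    and inf_pos: "(INF x. integral {x - a..x + a} q) > 0"
    and alpha: "\<alpha> \<ge> 1" and beta: "\<beta> > 0" and Xpos: "X > 0"
    and dcomp: "\<And>x t. \<bar>x\<bar> \<ge> X \<Longrightarrow> \<bar>t - x\<bar> \<le> \<beta> \<Longrightarrow>
                  1 / \<alpha> \<le> dfun q t / dfun q x \<and> dfun q t / dfun q x \<le> \<alpha>"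
  shows "\<exists>c>0. \<forall>p::ereal. p > 1 \<longrightarrow> (\<exists>cp>0. \<forall>x.
           ereal (inverse c * dfun q x powr (1 / conj_exp p)) \<le> Gfun p q x \<and>
           Gfun p q x \<le> ereal (cp * dfun q x powr (1 / conj_exp p)))"
proof -
  interpret Q: qset2 q a \<alpha> \<beta> X
    by unfold_locales (use q_nonneg q_loc a_pos inf_pos alpha beta Xpos dcomp in auto)
  obtain C where C: "C > 0" and KC: "\<And>x T. x \<le> T \<Longrightarrow> integral {x..T} (Q.P x) \<le> C * dfun q x"
    using Q.K_est by blast
  show ?thesis
  proof (rule exI[of _ "4 * exp 2"], intro conjI allI impI)
    show "(0::real) < 4 * exp 2" by simp
    fix p :: ereal assume p: "p > 1"
    have Cp: "C powr (1 / conj_exp p) > 0" using C by simp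
    have lowb: "ereal (inverse (4 * exp 2) * dfun q x powr (1 / conj_exp p)) \<le> Gfun p q x" for x
    proof -
      obtain y where yD: "y \<in> Dset p q" and yb: "inverse (4 * exp 2) * dfun q x powr (1 / conj_exp p) \<le> \<bar>y x\<bar>"
        using Q.lower_bound[OF p] by blast
      have "ereal (inverse (4 * exp 2) * dfun q x powr (1 / conj_exp p)) \<le> ereal \<bar>y x\<bar>" using yb by simp
      also have "\<dots> \<le> Gfun p q x" unfolding Gfun_def by (rule SUP_upper[OF yD])
      finally show ?thesis .
    qed
    have upb: "Gfun p q x \<le> ereal (C powr (1 / conj_exp p) * dfun q x powr (1 / conj_exp p))" for x
      unfolding Gfun_def
    proof (rule SUP_least)
      have dpos: "dfun q x > 0" by (rule Q.d_pos)
      fix z assume zD: "z \<in> Dset p q"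
      have "\<bar>z x\<bar> \<le> (C * dfun q x) powr (1 / conj_exp p)" by (rule Q.upper_bound[OF p zD C KC])
      also have "\<dots> = C powr (1 / conj_exp p) * dfun q x powr (1 / conj_exp p)"
        using C dpos by (simp add: powr_mult)
      finally show "ereal \<bar>z x\<bar> \<le> ereal (C powr (1 / conj_exp p) * dfun q x powr (1 / conj_exp p))" by simp
    qed
    show "\<exists>cp>0. \<forall>x. ereal (inverse (4 * exp 2) * dfun q x powr (1 / conj_exp p)) \<le> Gfun p q x \<and>
           Gfun p q x \<le> ereal (cp * dfun q x powr (1 / conj_exp p))"
      using Cp lowb upb by blast
  qed
qed

end
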